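(* For all $b\ne c$ in $[k]$, the off-diagonal $bc$ block of the population Hessian satisfies $$\nabla_{bc}\Phi(\mathbf x)=-\sum_{l\in[k]}p_l\,\mathbb E\Big\{\pi_{Y_l}(b)\pi_{Y_l}(c)\Big[\Big(\mu_l+\tfrac1\lambda\big(x^b+x^c-2\langle x^B\rangle_{\pi_{Y_l}}\big)\Big)^{\otimes2}+\tfrac1\lambda I_d-\tfrac2{\lambda^2}\langle x^B;x^B\rangle_{\pi_{Y_l}}\Big]\Big\}.$$ In particular, each such block is a shift by a multiple of the identity of a matrix of rank at most $k^2$.
   Context: Let $p_1,\dots,p_k\in(0,1)$ with $\sum_lp_l=1$, $\mu_1,\dots,\mu_k\in\mathbb R^d$ and $\lambda>0$. A data point is $(y,Y)$, $y$ one-hot in $\mathbb R^k$ with $\mathbb P(y=e_l)=p_l$, and given $y=e_l$, $Y=\mu_l+Z$ with $Z\sim\mathcal N(0,I_d/\lambda)$; write $Y_l=\mu_l+Z$. For $\mathbf x=(x^1,\dots,x^k)\in(\mathbb R^d)^k$ let $L(\mathbf x,(y,Y))=-\sum_cy_cx^c\cdot Y+\log\sum_c\exp(x^c\cdot Y)$, $\Phi(\mathbf x)=\mathbb E[L(\mathbf x,(y,Y))]$, and $\nabla_{bc}\Phi$ the $d\times d$ block $\nabla_{x^b}\nabla_{x^c}\Phi$. For $Y\in\mathbb R^d$, $\pi_Y(c)=\exp(x^c\cdot Y)/\sum_a\exp(x^a\cdot Y)$, a probability measure on $[k]$; $\langle x^B\rangle_{\pi_Y}=\sum_ax^a\pi_Y(a)$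 and $\langle x^B;x^B\rangle_{\pi_Y}=\sum_ax^a\otimes x^a\,\pi_Y(a)-\langle x^B\rangle_{\pi_Y}^{\otimes2}$. *)

theory Defs
  imports "HOL-Analysis.Analysis"
begin

text \<open>Classes are indexed by a finite type 'k (so [k] = UNIV :: 'k set, k = CARD('k)),
  space dimension by a finite type 'd (R^d = real^'d). A parameter
  x = (x^1,...,x^k) is an element of real^'d^'k, with x^c = x $ c.\<close>

definition gauss_dens :: "real \<Rightarrow> real^'d \<Rightarrow> real" where
  "gauss_dens lam z = (lam / (2 * pi)) powr (real CARD('d) / 2) * exp (- lam * (norm z)\<^sup>2 / 2)"

definition gauss_meas :: "real \<Rightarrow> (real^'d) measure" where
  "gauss_meas lam = density lborel (\<lambda>z. ennreal (gauss_dens lam z))"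

definition loss :: "real^'d^'k \<Rightarrow> real^'k \<Rightarrow> real^'d \<Rightarrow> real" where
  "loss x y Y = - (\<Sum>c\<in>UNIV. y $ c * ((x $ c) \<bullet> Y)) + ln (\<Sum>c\<in>UNIV. exp ((x $ c) \<bullet> Y))"

text \<open>Population risk Phi(x) = E[L(x,(y,Y))], y one-hot with P(y = e_l) = p_l,
  and given y = e_l, Y = mu_l + Z.\<close>
definition Phi :: "('k::finite \<Rightarrow> real) \<Rightarrow> ('k \<Rightarrow> real^'d) \<Rightarrow> real \<Rightarrow> real^'d^'k \<Rightarrow> real" where
  "Phi p mu lam x = (\<Sum>l\<in>UNIV. p l * (\<integral>z. loss x (axis l 1) (mu l + z) \<partial>gauss_meas lam))"

definition softmax :: "real^'d^'k::finite \<Rightarrow> real^'d \<Rightarrow> 'k \<Rightarrow> real" where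
  "softmax x Y c = exp ((x $ c) \<bullet> Y) / (\<Sum>a\<in>UNIV. exp ((x $ a) \<bullet> Y))"

definition outer :: "real^'d \<Rightarrow> real^'d \<Rightarrow> real^'d^'d" where
  "outer u v = (\<chi> i j. u $ i * v $ j)"

definition gibbs_mean :: "real^'d^'k::finite \<Rightarrow> real^'d \<Rightarrow> real^'d" where
  "gibbs_mean x Y = (\<Sum>a\<in>UNIV. softmax x Y a *\<^sub>R x $ a)"

definition gibbs_cov :: "real^'d^'k::finite \<Rightarrow> real^'d \<Rightarrow> real^'d^'d" where
  "gibbs_cov x Y = (\<Sum>a\<in>UNIV. softmax x Y a *\<^sub>R outer (x $ a) (x $ a))
                   - outer (gibbs_mean x Y) (gibbs_mean x Y)"

definition coord :: "'k::finite \<Rightarrow> 'd::finite \<Rightarrow> real^'d^'k" where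
  "coord b i = axis b (axis i 1)"

end

theory Submission
  imports Defs "HOL-Probability.Distributions"
begin

lemma norm_sq_Basis: "(norm (z::'a::euclidean_space))\<^sup>2 = (\<Sum>b\<in>Basis. (z \<bullet> b)\<^sup>2)"
proof -
  have "(norm z)\<^sup>2 = z \<bullet> z" by (simp add: power2_norm_eq_inner)
  also have "\<dots> = (\<Sum>b\<in>Basis. (z \<bullet> b)\<^sup>2)" by (subst euclidean_inner) (simp add: power2_eq_square)
  finally show ?thesis .
qed

lemma gauss1_integrable:
  fixes a :: real assumes a: "a > 0"
  shows "integrable lborel (\<lambda>s::real. exp (- a * s\<^sup>2))"
proof -
  define \<sigma> where "\<sigma> = sqrt (1 / (2 * a))"
  have s2: "\<sigma>\<^sup>2 = 1 / (2*a)" using a by (simp add: \<sigma>_def)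
  have sp: "\<sigma> > 0" using a by (simp add: \<sigma>_def)
  have eq: "exp (- a * s\<^sup>2) = sqrt (2 * pi * \<sigma>\<^sup>2) * normal_density 0 \<sigma> s" for s
  proof -
    have e: "s\<^sup>2 / (2 * \<sigma>\<^sup>2) = a * s\<^sup>2" unfolding s2 using a by simp
    have "sqrt (2 * pi * \<sigma>\<^sup>2) > 0" using sp by simp
    then show ?thesis unfolding normal_density_def using sp by (simp add: e)
  qed
  show ?thesis unfolding eq using sp by (intro integrable_mult_right integrable_normal_density) auto
qed

lemma gauss_integrable:
  fixes a :: real assumes a: "a > 0"
  shows "integrable lborel (\<lambda>z::'a::euclidean_space. exp (- a * (norm z)\<^sup>2))"
proof (unfold integrable_iff_bounded, intro conjI)
  show "(\<lambda>z::'a. exp (- a * (norm z)\<^sup>2)) \<in> borel_measurable lborel" by measurable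
  have "(\<integral>\<^sup>+ z. ennreal (norm (exp (- a * (norm (z::'a))\<^sup>2))) \<partial>lborel)
      = (\<integral>\<^sup>+ z. (\<Prod>b\<in>Basis. ennreal (exp (- a * ((z::'a) \<bullet> b)\<^sup>2))) \<partial>lborel)"
  proof (intro nn_integral_cong)
    fix z :: 'a
    have "exp (- a * (norm z)\<^sup>2) = (\<Prod>b\<in>Basis. exp (- a * (z \<bullet> b)\<^sup>2))"
      by (simp add: norm_sq_Basis sum_distrib_left exp_sum[symmetric] sum_negf)
    then show "ennreal (norm (exp (- a * (norm z)\<^sup>2))) = (\<Prod>b\<in>Basis. ennreal (exp (- a * (z \<bullet> b)\<^sup>2)))"
      by (simp add: prod_ennreal abs_of_nonneg prod_nonneg)
  qed
  also have "\<dots> = (\<Prod>b\<in>(Basis::'a set). \<integral>\<^sup>+ s. ennreal (exp (- a * s\<^sup>2)) \<partial>lborel)"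
    by (rule nn_integral_lborel_prod[where f="\<lambda>b s. ennreal (exp (- a * s\<^sup>2))"]) auto
  also have "\<dots> < \<infinity>"
    using gauss1_integrable[OF a]
    by (simp add: less_top[symmetric] ennreal_prod_eq_top integrable_iff_bounded power_eq_top_ennreal)
  finally show "(\<integral>\<^sup>+ z. ennreal (norm (exp (- a * (norm (z::'a))\<^sup>2))) \<partial>lborel) < \<infinity>" .
qed

lemma gauss_dens_meas[measurable]: "gauss_dens lam \<in> borel_measurable borel"
  unfolding gauss_dens_def[abs_def] by measurable

lemma gauss_dens_nonneg: "0 \<le> gauss_dens lam z"
  unfolding gauss_dens_def by simp

lemma meas_gauss_meas: "f \<in> borel_measurable borel \<Longrightarrow> f \<in> borel_measurable (gauss_meas lam)"
  unfolding gauss_meas_def by (simp add: measurable_cong_sets[OF sets_density[symmetric, unfolded sets_lborel] refl])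

lemma sq_exp_bound:
  fixes lam s :: real assumes lam: "lam > 0"
  shows "s\<^sup>2 * exp (- lam * s\<^sup>2 / 2) \<le> (4 / lam) * exp (- (lam/4) * s\<^sup>2)"
proof -
  have "lam * s\<^sup>2 / 4 \<le> exp (lam * s\<^sup>2 / 4)"
    using exp_ge_add_one_self[of "lam * s\<^sup>2 / 4"] by linarith
  then have "s\<^sup>2 \<le> (4 / lam) * exp (lam * s\<^sup>2 / 4)" using lam by (simp add: field_simps)
  then have "s\<^sup>2 * exp (- lam * s\<^sup>2 / 2) \<le> (4 / lam) * exp (lam * s\<^sup>2 / 4) * exp (- lam * s\<^sup>2 / 2)"
    by (intro mult_right_mono) auto
  also have "\<dots> = (4 / lam) * exp (- (lam/4) * s\<^sup>2)"
    by (simp add: mult.assoc exp_add[symmetric] field_simps)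
  finally show ?thesis .
qed

lemma gauss_poly_integrable:
  fixes lam :: real assumes lam: "lam > 0"
  shows "integrable lborel (\<lambda>z::'a::euclidean_space. (1 + norm z)\<^sup>2 * exp (- lam * (norm z)\<^sup>2 / 2))"
proof (rule Bochner_Integration.integrable_bound)
  show "integrable lborel (\<lambda>z::'a. 2 * exp (- (lam/2) * (norm z)\<^sup>2) + 2 * ((4 / lam) * exp (- (lam/4) * (norm z)\<^sup>2)))"
    using lam by (intro Bochner_Integration.integrable_add integrable_mult_right gauss_integrable) auto
  show "(\<lambda>z::'a. (1 + norm z)\<^sup>2 * exp (- lam * (norm z)\<^sup>2 / 2)) \<in> borel_measurable lborel" by measurable
  show "AE z in lborel. norm ((1 + norm z)\<^sup>2 * exp (- lam * (norm z)\<^sup>2 / 2))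
      \<le> norm (2 * exp (- (lam/2) * (norm (z::'a))\<^sup>2) + 2 * ((4 / lam) * exp (- (lam/4) * (norm z)\<^sup>2)))"
  proof (intro AE_I2)
    fix z :: 'a
    let ?s = "norm z"
    have e: "exp (- lam * ?s\<^sup>2 / 2) = exp (- (lam/2) * ?s\<^sup>2)" by (simp add: field_simps)
    have "(1 + ?s)\<^sup>2 \<le> 2 + 2 * ?s\<^sup>2"
      using sum_squares_ge_zero[of "?s - 1" 0] by (simp add: power2_eq_square algebra_simps)
    then have "(1 + ?s)\<^sup>2 * exp (- lam * ?s\<^sup>2 / 2) \<le> (2 + 2 * ?s\<^sup>2) * exp (- lam * ?s\<^sup>2 / 2)"
      by (intro mult_right_mono) auto
    also have "\<dots> = 2 * exp (- (lam/2) * ?s\<^sup>2) + 2 * (?s\<^sup>2 * exp (- lam * ?s\<^sup>2 / 2))"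
      by (simp add: e algebra_simps)
    also have "\<dots> \<le> 2 * exp (- (lam/2) * ?s\<^sup>2) + 2 * ((4 / lam) * exp (- (lam/4) * ?s\<^sup>2))"
      using sq_exp_bound[OF lam, of ?s] by linarith
    finally show "norm ((1 + ?s)\<^sup>2 * exp (- lam * ?s\<^sup>2 / 2))
      \<le> norm (2 * exp (- (lam/2) * ?s\<^sup>2) + 2 * ((4 / lam) * exp (- (lam/4) * ?s\<^sup>2)))"
      using lam by (simp add: abs_of_nonneg)
  qed
qed

lemma gauss_meas_integrable:
  fixes f :: "real^'d \<Rightarrow> 'b::{banach, second_countable_topology}"
  assumes lam: "lam > 0" and fm: "f \<in> borel_measurable borel"
    and bnd: "\<And>z. norm (f z) \<le> C * (1 + norm z)\<^sup>2"
  shows "integrable (gauss_meas lam) f"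
proof -
  define K where "K = (lam / (2 * pi)) powr (real CARD('d) / 2)"
  have K: "K \<ge> 0" unfolding K_def by simp
  have "integrable lborel (\<lambda>z. gauss_dens lam z *\<^sub>R f z)"
  proof (rule Bochner_Integration.integrable_bound)
    show "integrable lborel (\<lambda>z::real^'d. (K * C) * ((1 + norm z)\<^sup>2 * exp (- lam * (norm z)\<^sup>2 / 2)))"
      using gauss_poly_integrable[OF lam] by (intro integrable_mult_right)
    show "(\<lambda>z. gauss_dens lam z *\<^sub>R f z) \<in> borel_measurable lborel" using fm by measurable
    show "AE z in lborel. norm (gauss_dens lam z *\<^sub>R f z)
      \<le> norm ((K * C) * ((1 + norm z)\<^sup>2 * exp (- lam * (norm z)\<^sup>2 / 2)))"
    proof (intro AE_I2)
      fix z :: "real^'d"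
      have gd: "gauss_dens lam z = K * exp (- lam * (norm z)\<^sup>2 / 2)" unfolding gauss_dens_def K_def by simp
      have "norm (gauss_dens lam z *\<^sub>R f z) = gauss_dens lam z * norm (f z)"
        using gauss_dens_nonneg[of lam z] by simp
      also have "\<dots> \<le> gauss_dens lam z * (C * (1 + norm z)\<^sup>2)"
        using gauss_dens_nonneg[of lam z] bnd[of z] by (intro mult_left_mono) auto
      also have "\<dots> = (K * C) * ((1 + norm z)\<^sup>2 * exp (- lam * (norm z)\<^sup>2 / 2))"
        unfolding gd by (simp add: algebra_simps)
      also have "\<dots> \<le> norm \<dots>" by simp
      finally show "norm (gauss_dens lam z *\<^sub>R f z) \<le> norm ((K * C) * ((1 + norm z)\<^sup>2 * exp (- lam * (norm z)\<^sup>2 / 2)))" .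
    qed
  qed
  then show ?thesis unfolding gauss_meas_def
    using fm by (subst integrable_density) (auto simp: gauss_dens_nonneg)
qed

lemma DUI:
  fixes M :: "'a measure" and f f' :: "real \<Rightarrow> 'a \<Rightarrow> real" and G :: "'a \<Rightarrow> real"
  assumes der: "\<And>t z. \<bar>t\<bar> \<le> 1 \<Longrightarrow> ((\<lambda>s. f s z) has_real_derivative f' t z) (at t)"
    and meas: "\<And>t. f t \<in> borel_measurable M" and meas': "f' 0 \<in> borel_measurable M"
    and int0: "integrable M (f 0)" and intG: "integrable M G"
    and bnd: "\<And>t z. \<bar>t\<bar> \<le> 1 \<Longrightarrow> \<bar>f' t z\<bar> \<le> G z"
  shows "((\<lambda>t. \<integral>z. f t z \<partial>M) has_real_derivative (\<integral>z. f' 0 z \<partial>M)) (at 0)"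
proof -
  have mvt: "\<bar>f t z - f 0 z\<bar> \<le> \<bar>t\<bar> * G z" if t: "\<bar>t\<bar> \<le> 1" for t z
  proof -
    consider "t = 0" | "0 < t" | "t < 0" by linarith
    then show ?thesis
    proof cases
      case 1 then show ?thesis by simp
    next
      case 2
      from MVT2[OF 2, of "\<lambda>s. f s z" "\<lambda>s. f' s z"] der t obtain \<xi> where
        \<xi>: "0 < \<xi>" "\<xi> < t" "f t z - f 0 z = (t - 0) * f' \<xi> z" by force
      have "\<bar>f' \<xi> z\<bar> \<le> G z" using bnd[of \<xi> z] \<xi> t by auto
      then show ?thesis using \<xi> 2 by (simp add: abs_mult)
    next
      case 3
      from MVT2[OF 3, of "\<lambda>s. f s z" "\<lambda>s. f' s z"] der t obtain \<xi> where
        \<xi>: "t < \<xi>" "\<xi> < 0" "f 0 z - f t z = (0 - t) * f' \<xi> z" by force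
      have "\<bar>f' \<xi> z\<bar> \<le> G z" using bnd[of \<xi> z] \<xi> t by auto
      then show ?thesis using \<xi> 3 by (simp add: abs_mult abs_minus_commute)
    qed
  qed
  have intt: "integrable M (f t)" if t: "\<bar>t\<bar> \<le> 1" for t
  proof -
    have "integrable M (\<lambda>z. f t z - f 0 z)"
    proof (rule Bochner_Integration.integrable_bound)
      show "integrable M (\<lambda>z. \<bar>t\<bar> * G z)" using intG by simp
      show "(\<lambda>z. f t z - f 0 z) \<in> borel_measurable M" using meas by measurable
      show "AE z in M. norm (f t z - f 0 z) \<le> norm (\<bar>t\<bar> * G z)"
        using mvt[OF t] by (intro AE_I2) (auto intro: order_trans[OF _ abs_ge_self])
    qed
    from Bochner_Integration.integrable_add[OF this int0] show ?thesis by simp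
  qed
  let ?F = "\<lambda>t. \<integral>z. f t z \<partial>M"
  show ?thesis
    unfolding has_field_derivative_iff tendsto_at_iff_sequentially
  proof (intro allI impI)
    fix X :: "nat \<Rightarrow> real" assume X0: "\<forall>i. X i \<in> UNIV - {0}" and X: "X \<longlonglongrightarrow> 0"
    define s where "s n z = (if \<bar>X n\<bar> \<le> 1 then (f (X n) z - f 0 z) / X n else f' 0 z)" for n z
    have ev: "eventually (\<lambda>n. \<bar>X n\<bar> \<le> 1) sequentially"
      using X unfolding tendsto_iff by (auto elim!: allE[of _ 1] elim: eventually_mono simp: dist_real_def)
    have lim: "(\<lambda>n. \<integral>z. s n z \<partial>M) \<longlonglongrightarrow> (\<integral>z. f' 0 z \<partial>M)"
    proof (rule integral_dominated_convergence[where w=G])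
      show "f' 0 \<in> borel_measurable M" by fact
      show "s n \<in> borel_measurable M" for n unfolding s_def using meas meas' by measurable
      show "integrable M G" by fact
      show "AE z in M. (\<lambda>n. s n z) \<longlonglongrightarrow> f' 0 z"
      proof (intro AE_I2)
        fix z
        have "((\<lambda>y. (f y z - f 0 z) / (y - 0)) \<longlongrightarrow> f' 0 z) (at 0)"
          using der[of 0 z] unfolding has_field_derivative_iff by simp
        then have "((\<lambda>y. (f y z - f 0 z) / (y - 0)) \<circ> X) \<longlonglongrightarrow> f' 0 z"
          using X0 X unfolding tendsto_at_iff_sequentially by blast
        moreover have "eventually (\<lambda>n. ((\<lambda>y. (f y z - f 0 z) / (y - 0)) \<circ> X) n = s n z) sequentially"
          using ev by eventually_elim (simp add: s_def)
        ultimately show "(\<lambda>n. s n z) \<longlonglongrightarrow> f' 0 z" by (rule Lim_transform_eventually)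
      qed
      show "AE z in M. norm (s n z) \<le> G z" for n
      proof (intro AE_I2)
        fix z
        show "norm (s n z) \<le> G z"
        proof (cases "\<bar>X n\<bar> \<le> 1")
          case True
          have "X n \<noteq> 0" using X0 by auto
          then have "\<bar>(f (X n) z - f 0 z) / X n\<bar> \<le> G z"
            using mvt[OF True, of z] by (simp add: abs_divide divide_le_eq mult.commute)
          then show ?thesis using True by (simp add: s_def)
        next
          case False then show ?thesis using bnd[of 0 z] by (simp add: s_def)
        qed
      qed
    qed
    have "eventually (\<lambda>n. (\<integral>z. s n z \<partial>M) = ((\<lambda>y. (?F y - ?F 0) / (y - 0)) \<circ> X) n) sequentially"
      using ev
    proof eventually_elim
      case (elim n)
      then have "(\<integral>z. s n z \<partial>M) = (\<integral>z. (f (X n) z - f 0 z) / X n \<partial>M)"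
        by (simp add: s_def)
      also have "\<dots> = (?F (X n) - ?F 0) / X n"
        using intt[OF elim] int0 by simp
      finally show ?case by simp
    qed
    with lim show "((\<lambda>y. (?F y - ?F 0) / (y - 0)) \<circ> X) \<longlonglongrightarrow> (\<integral>z. f' 0 z \<partial>M)"
      by (rule Lim_transform_eventually)
  qed
qed

lemma norm_shift_sq:
  fixes w :: "real^'d"
  shows "(norm (w - s *\<^sub>R axis j 1))\<^sup>2 = (norm w)\<^sup>2 - 2 * s * w $ j + s\<^sup>2"
  unfolding power2_norm_eq_inner
  by (simp add: inner_diff_left inner_diff_right inner_axis inner_axis' inner_commute
      power2_eq_square algebra_simps)

lemma gauss_dens_eq: "gauss_dens lam z = ((lam / (2 * pi)) powr (real CARD('d) / 2)) * exp (- (lam/2) * (norm (z::real^'d))\<^sup>2)"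
  unfolding gauss_dens_def by simp

lemma integral_gauss_meas:
  fixes f :: "real^'d \<Rightarrow> real"
  assumes "f \<in> borel_measurable borel"
  shows "(\<integral>z. f z \<partial>gauss_meas lam) = (\<integral>z. gauss_dens lam z * f z \<partial>lborel)"
  unfolding gauss_meas_def using assms
  by (subst integral_density) (auto simp: gauss_dens_nonneg)

lemma integrable_gauss_meas_iff:
  fixes f :: "real^'d \<Rightarrow> real"
  assumes "f \<in> borel_measurable borel"
  shows "integrable (gauss_meas lam) f \<longleftrightarrow> integrable lborel (\<lambda>z. gauss_dens lam z * f z)"
  unfolding gauss_meas_def using assms
  by (subst integrable_density) (auto simp: gauss_dens_nonneg)

lemma translate_integral:
  fixes g :: "real^'d \<Rightarrow> real"
  assumes "g \<in> borel_measurable borel"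
  shows "(\<integral>z. g (c + z) \<partial>lborel) = (\<integral>w. g w \<partial>lborel)"
proof -
  have "(\<integral>w. g w \<partial>lborel) = (\<integral>w. g w \<partial>distr lborel borel ((+) c))"
    by (simp add: lborel_distr_plus)
  also have "\<dots> = (\<integral>z. g (c + z) \<partial>lborel)"
    using assms by (subst integral_distr) auto
  finally show ?thesis by simp
qed

lemma stein:
  fixes \<phi> \<phi>' :: "real^'d \<Rightarrow> real" and j :: 'd and lam A B :: real
  assumes lam: "lam > 0"
    and der: "\<And>z. ((\<lambda>s. \<phi> (z + s *\<^sub>R axis j 1)) has_real_derivative \<phi>' z) (at 0)"
    and m1[measurable]: "\<phi> \<in> borel_measurable borel" and m2[measurable]: "\<phi>' \<in> borel_measurable borel"
    and b1: "\<And>z. \<bar>\<phi> z\<bar> \<le> A + B * norm z" and b2: "\<And>z. \<bar>\<phi>' z\<bar> \<le> A + B * norm z"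
  shows "(\<integral>z. \<phi> z * z $ j \<partial>gauss_meas lam) = (1 / lam) * (\<integral>z. \<phi>' z \<partial>gauss_meas lam)"
proof -
  let ?e = "axis j (1::real) :: real^'d"
  let ?N = "gauss_dens lam :: real^'d \<Rightarrow> real"
  define K where "K = (lam / (2 * pi)) powr (real CARD('d) / 2)"
  have K: "K \<ge> 0" unfolding K_def by simp
  have N: "?N z = K * exp (- (lam/2) * (norm z)\<^sup>2)" for z unfolding gauss_dens_eq K_def ..
  define C where "C = \<bar>A\<bar> + \<bar>B\<bar>"
  have C: "C \<ge> 0" unfolding C_def by simp
  have bb: "A + B * r \<le> C * (1 + r)" if "r \<ge> 0" for r
  proof -
    have "B * r \<le> \<bar>B\<bar> * r" using that by (intro mult_right_mono) auto
    then show ?thesis unfolding C_def using that by (simp add: algebra_simps)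
         (smt (verit, ccfv_SIG) mult_nonneg_nonneg)
  qed
  have lin_sq: "(1 + r) \<le> (1 + r)\<^sup>2" if "r \<ge> 0" for r :: real
    using that by (simp add: power2_eq_square)
  \<comment> \<open>Way 1: differentiate under the integral in the gauss_meas form\<close>
  define F where "F s = (\<integral>z. \<phi> (z + s *\<^sub>R ?e) \<partial>gauss_meas lam)" for s
  have dF: "(F has_real_derivative (\<integral>z. \<phi>' z \<partial>gauss_meas lam)) (at 0)"
  proof -
    have "((\<lambda>t. \<integral>z. \<phi> (z + t *\<^sub>R ?e) \<partial>gauss_meas lam) has_real_derivative
        (\<integral>z. \<phi>' (z + 0 *\<^sub>R ?e) \<partial>gauss_meas lam)) (at 0)"
    proof (rule DUI[where G="\<lambda>z. C * (2 + norm z)"])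
      show "((\<lambda>s. \<phi> (z + s *\<^sub>R ?e)) has_real_derivative \<phi>' (z + t *\<^sub>R ?e)) (at t)" for t z
      proof -
        have "((\<lambda>s. \<phi> ((z + t *\<^sub>R ?e) + s *\<^sub>R ?e)) has_real_derivative \<phi>' (z + t *\<^sub>R ?e)) (at 0)"
          by (rule der)
        then have "((\<lambda>s. \<phi> (z + (s + t) *\<^sub>R ?e)) has_real_derivative \<phi>' (z + t *\<^sub>R ?e)) (at 0)"
          by (simp add: scaleR_add_left add.assoc add.commute add.left_commute)
        then show ?thesis using DERIV_shift[of "\<lambda>s. \<phi> (z + s *\<^sub>R ?e)" _ 0 t] by simp
      qed
      show "(\<lambda>z. \<phi> (z + t *\<^sub>R ?e)) \<in> borel_measurable (gauss_meas lam)" for t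
        by (rule meas_gauss_meas) measurable
      show "(\<lambda>z. \<phi>' (z + 0 *\<^sub>R ?e)) \<in> borel_measurable (gauss_meas lam)"
        by (rule meas_gauss_meas) measurable
      show "integrable (gauss_meas lam) (\<lambda>z. \<phi> (z + 0 *\<^sub>R ?e))"
      proof (rule gauss_meas_integrable[OF lam, where C=C])
        show "(\<lambda>z. \<phi> (z + 0 *\<^sub>R ?e)) \<in> borel_measurable borel" by measurable
        fix z :: "real^'d"
        have "\<bar>\<phi> z\<bar> \<le> C * (1 + norm z)" using b1[of z] bb[of "norm z"] by simp
        also have "\<dots> \<le> C * (1 + norm z)\<^sup>2" using C lin_sq[of "norm z"] by (intro mult_left_mono) auto
        finally show "norm (\<phi> (z + 0 *\<^sub>R ?e)) \<le> C * (1 + norm z)\<^sup>2" by simp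
      qed
      show "integrable (gauss_meas lam) (\<lambda>z::real^'d. C * (2 + norm z))"
      proof (rule gauss_meas_integrable[OF lam, where C="2*C"])
        show "(\<lambda>z::real^'d. C * (2 + norm z)) \<in> borel_measurable borel" by measurable
        fix z :: "real^'d"
        have "C * (2 + norm z) \<le> 2 * C * (1 + norm z)" using C by (simp add: algebra_simps)
        also have "\<dots> \<le> 2 * C * (1 + norm z)\<^sup>2" using C lin_sq[of "norm z"] by (intro mult_left_mono) auto
        finally show "norm (C * (2 + norm z)) \<le> 2 * C * (1 + norm z)\<^sup>2" using C by simp
      qed
      show "\<bar>\<phi>' (z + t *\<^sub>R ?e)\<bar> \<le> C * (2 + norm z)" if t: "\<bar>t\<bar> \<le> 1" for t z
      proof -
        have nz: "norm (z + t *\<^sub>R ?e) \<le> 1 + norm z"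
          using norm_triangle_ineq[of z "t *\<^sub>R ?e"] t by simp
        have "\<bar>\<phi>' (z + t *\<^sub>R ?e)\<bar> \<le> C * (1 + norm (z + t *\<^sub>R ?e))"
          using b2[of "z + t *\<^sub>R ?e"] bb[of "norm (z + t *\<^sub>R ?e)"] by simp
        also have "\<dots> \<le> C * (2 + norm z)" using nz C by (intro mult_left_mono) auto
        finally show ?thesis .
      qed
    qed
    then show ?thesis unfolding F_def by simp
  qed
  \<comment> \<open>Way 2: translate and differentiate the density\<close>
  define F2 where "F2 s = (\<integral>w. K * exp (- (lam/2) * ((norm w)\<^sup>2 - 2 * s * w $ j + s\<^sup>2)) * \<phi> w \<partial>lborel)" for s
  have FF2: "F s = F2 s" for s
  proof -
    have "F s = (\<integral>z. ?N z * \<phi> (z + s *\<^sub>R ?e) \<partial>lborel)"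
      unfolding F_def by (rule integral_gauss_meas) measurable
    also have "\<dots> = (\<integral>z. (\<lambda>w. ?N (w - s *\<^sub>R ?e) * \<phi> w) (s *\<^sub>R ?e + z) \<partial>lborel)"
      by (simp add: add.commute)
    also have "\<dots> = (\<integral>w. ?N (w - s *\<^sub>R ?e) * \<phi> w \<partial>lborel)"
      by (rule translate_integral) measurable
    also have "\<dots> = F2 s"
      unfolding F2_def N norm_shift_sq ..
    finally show ?thesis .
  qed
  have dF2: "(F2 has_real_derivative lam * (\<integral>z. \<phi> z * z $ j \<partial>gauss_meas lam)) (at 0)"
  proof -
    define G where "G w = (lam * C * K * exp (lam / 2)) * ((1 + norm w)\<^sup>2 * exp (- (lam/2) * (norm w)\<^sup>2 / 2))" for w :: "real^'d"
    have "((\<lambda>s. \<integral>w. K * exp (- (lam/2) * ((norm w)\<^sup>2 - 2 * s * w $ j + s\<^sup>2)) * \<phi> w \<partial>lborel)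
        has_real_derivative
        (\<integral>w. K * exp (- (lam/2) * ((norm w)\<^sup>2 - 2 * 0 * w $ j + 0\<^sup>2))
                * (lam * (w $ j - 0)) * \<phi> w \<partial>lborel)) (at 0)"
    proof (rule DUI[where G=G])
      show "((\<lambda>s. K * exp (- (lam/2) * ((norm w)\<^sup>2 - 2 * s * w $ j + s\<^sup>2)) * \<phi> w)
          has_real_derivative
          K * exp (- (lam/2) * ((norm w)\<^sup>2 - 2 * t * w $ j + t\<^sup>2)) * (lam * (w $ j - t)) * \<phi> w) (at t)"
        for t w
        by (auto intro!: derivative_eq_intros simp: algebra_simps)
      show "(\<lambda>w. K * exp (- (lam/2) * ((norm w)\<^sup>2 - 2 * t * w $ j + t\<^sup>2)) * \<phi> w) \<in> borel_measurable lborel" for t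
        by measurable
      show "(\<lambda>w. K * exp (- (lam/2) * ((norm w)\<^sup>2 - 2 * 0 * w $ j + 0\<^sup>2)) * (lam * (w $ j - 0)) * \<phi> w)
          \<in> borel_measurable lborel"
        by measurable
      show "integrable lborel (\<lambda>w. K * exp (- (lam/2) * ((norm w)\<^sup>2 - 2 * 0 * w $ j + 0\<^sup>2)) * \<phi> w)"
      proof -
        have "integrable (gauss_meas lam) \<phi>"
        proof (rule gauss_meas_integrable[OF lam m1, where C=C])
          fix z :: "real^'d"
          have "\<bar>\<phi> z\<bar> \<le> C * (1 + norm z)" using b1[of z] bb[of "norm z"] by simp
          also have "\<dots> \<le> C * (1 + norm z)\<^sup>2" using C lin_sq[of "norm z"] by (intro mult_left_mono) auto
          finally show "norm (\<phi> z) \<le> C * (1 + norm z)\<^sup>2" by simp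
        qed
        then show ?thesis using integrable_gauss_meas_iff[OF m1, of lam] by (simp add: N)
      qed
      show "integrable lborel G"
        unfolding G_def using lam by (intro integrable_mult_right gauss_poly_integrable) auto
      show "\<bar>K * exp (- (lam/2) * ((norm w)\<^sup>2 - 2 * t * w $ j + t\<^sup>2)) * (lam * (w $ j - t)) * \<phi> w\<bar> \<le> G w"
        if t: "\<bar>t\<bar> \<le> 1" for t w
      proof -
        have wj: "\<bar>w $ j\<bar> \<le> norm w" by (rule component_le_norm_cart)
        have q: "(norm w)\<^sup>2 - 2 * t * w $ j + t\<^sup>2 = (norm (w - t *\<^sub>R ?e))\<^sup>2" by (simp add: norm_shift_sq)
        have tri: "norm w \<le> norm (w - t *\<^sub>R ?e) + \<bar>t\<bar>"
          using norm_triangle_ineq[of "w - t *\<^sub>R ?e" "t *\<^sub>R ?e"] by simp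
        have "(norm w)\<^sup>2 \<le> 2 * (norm (w - t *\<^sub>R ?e))\<^sup>2 + 2"
        proof -
          have "(norm w)\<^sup>2 \<le> (norm (w - t *\<^sub>R ?e) + \<bar>t\<bar>)\<^sup>2" using tri by (intro power_mono) auto
          also have "\<dots> \<le> 2 * (norm (w - t *\<^sub>R ?e))\<^sup>2 + 2 * \<bar>t\<bar>\<^sup>2"
            using sum_squares_ge_zero[of "norm (w - t *\<^sub>R ?e) - \<bar>t\<bar>" 0]
            by (simp add: power2_eq_square algebra_simps)
          also have "\<dots> \<le> 2 * (norm (w - t *\<^sub>R ?e))\<^sup>2 + 2"
            using t by (simp add: abs_le_square_iff power_le_one abs_square_le_1)
          finally show ?thesis .
        qed
        then have "lam * (norm w)\<^sup>2 \<le> lam * (2 * (norm (w - t *\<^sub>R ?e))\<^sup>2 + 2)"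
          using lam by (intro mult_left_mono) auto
        then have ex: "exp (- (lam/2) * ((norm w)\<^sup>2 - 2 * t * w $ j + t\<^sup>2)) \<le> exp (lam/2) * exp (- (lam/2) * (norm w)\<^sup>2 / 2)"
          unfolding q exp_add[symmetric] using lam by (simp add: field_simps)
        have l1: "\<bar>lam * (w $ j - t)\<bar> \<le> lam * (1 + norm w)"
          using lam wj t by (simp add: abs_mult)
        have l2: "\<bar>\<phi> w\<bar> \<le> C * (1 + norm w)" using b1[of w] bb[of "norm w"] by simp
        have "\<bar>K * exp (- (lam/2) * ((norm w)\<^sup>2 - 2 * t * w $ j + t\<^sup>2)) * (lam * (w $ j - t)) * \<phi> w\<bar>
            = K * exp (- (lam/2) * ((norm w)\<^sup>2 - 2 * t * w $ j + t\<^sup>2)) * (\<bar>lam * (w $ j - t)\<bar> * \<bar>\<phi> w\<bar>)"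
          using K by (simp add: abs_mult)
        also have "\<dots> \<le> K * (exp (lam/2) * exp (- (lam/2) * (norm w)\<^sup>2 / 2)) * ((lam * (1 + norm w)) * (C * (1 + norm w)))"
          using K C lam l1 l2 ex by (intro mult_mono mult_nonneg_nonneg) auto
        also have "\<dots> = G w" unfolding G_def by (simp add: power2_eq_square algebra_simps)
        finally show ?thesis .
      qed
    qed
    moreover have "(\<integral>w. K * exp (- (lam/2) * ((norm w)\<^sup>2 - 2 * 0 * w $ j + 0\<^sup>2))
                * (lam * (w $ j - 0)) * \<phi> w \<partial>lborel) = lam * (\<integral>z. \<phi> z * z $ j \<partial>gauss_meas lam)"
    proof -
      have "(\<integral>z. \<phi> z * z $ j \<partial>gauss_meas lam) = (\<integral>z. ?N z * (\<phi> z * z $ j) \<partial>lborel)"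
        by (rule integral_gauss_meas) measurable
      then show ?thesis by (simp add: N algebra_simps)
    qed
    ultimately show ?thesis unfolding F2_def by simp
  qed
  have "F = F2" using FF2 by auto
  with dF dF2 have "(\<integral>z. \<phi>' z \<partial>gauss_meas lam) = lam * (\<integral>z. \<phi> z * z $ j \<partial>gauss_meas lam)"
    using DERIV_unique by metis
  then show ?thesis using lam by (simp add: field_simps)
qed

lemma vec_nth_meas[measurable (raw)]:
  assumes "f \<in> borel_measurable M"
  shows "(\<lambda>z. (f z :: 'a::real_normed_vector^'n) $ i) \<in> borel_measurable M"
proof -
  have "(\<lambda>v::'a^'n. v $ i) \<in> borel_measurable borel"
    by (intro borel_measurable_continuous_onI bounded_linear.continuous_on[OF bounded_linear_vec_nth] continuous_on_id)
  from measurable_compose[OF assms this] show ?thesis .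
qed
lemma outer_sum: "outer u v = (\<Sum>i\<in>UNIV. \<Sum>j\<in>UNIV. (u $ i * v $ j) *\<^sub>R axis i (axis j (1::real)))"
proof -
  have "(\<Sum>i\<in>UNIV. \<Sum>j\<in>UNIV. (u $ i * v $ j) *\<^sub>R axis i (axis j (1::real))) $ a $ b = u $ a * v $ b" for a b
  proof -
    have "(\<Sum>i\<in>UNIV. \<Sum>j\<in>UNIV. (u $ i * v $ j) *\<^sub>R axis i (axis j (1::real))) $ a $ b
       = (\<Sum>i\<in>UNIV. if i = a then (\<Sum>j\<in>UNIV. if j = b then u $ i * v $ j else 0) else 0)"
    proof -
      have md: "\<And>c P. (c::real) * (if P then 1 else 0) = (if P then c else 0)" by simp
      show ?thesis unfolding sum_component by (intro sum.cong refl) (auto simp: axis_def md)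
    qed
    also have "\<dots> = u $ a * v $ b" by simp
    finally show ?thesis .
  qed
  then show ?thesis by (simp add: vec_eq_iff outer_def)
qed

lemma softmax_meas[measurable (raw)]:
  assumes [measurable]: "g \<in> borel_measurable M"
  shows "(\<lambda>z. softmax x (g z) a) \<in> borel_measurable M"
  unfolding softmax_def by measurable

lemma outer_meas[measurable (raw)]:
  fixes f g :: "'a \<Rightarrow> real^'d"
  assumes [measurable]: "f \<in> borel_measurable M" "g \<in> borel_measurable M"
  shows "(\<lambda>z. outer (f z) (g z)) \<in> borel_measurable M"
  unfolding outer_sum by measurable

lemma gibbs_mean_meas[measurable (raw)]:
  assumes [measurable]: "g \<in> borel_measurable M"
  shows "(\<lambda>z. gibbs_mean x (g z)) \<in> borel_measurable M"
  unfolding gibbs_mean_def by measurable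

lemma gibbs_cov_meas[measurable (raw)]:
  assumes [measurable]: "g \<in> borel_measurable M"
  shows "(\<lambda>z. gibbs_cov x (g z)) \<in> borel_measurable M"
  unfolding gibbs_cov_def by measurable

lemma test: "(\<lambda>z::real^'d. softmax x (mu + z) b * gibbs_cov x (mu + z) $ i $ j * (mu + z) $ j) \<in> borel_measurable borel"
  by measurable

lemma test2: "(\<lambda>z::real^'d. (softmax x (mu + z) b) *\<^sub>R outer (mu + gibbs_mean x (mu + z)) (mu + z) + (1/lam) *\<^sub>R mat 1 - (2 / lam\<^sup>2) *\<^sub>R gibbs_cov x (mu + z)) \<in> borel_measurable borel"
  by measurable

lemma expsum_pos: "(\<Sum>a\<in>(UNIV::'k::finite set). exp (f a :: real)) > 0"
  by (intro sum_pos) auto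

lemma lse_deriv:
  fixes u w :: "'k::finite \<Rightarrow> real"
  shows "((\<lambda>t. ln (\<Sum>a\<in>UNIV. exp (u a + t * w a))) has_real_derivative
           (\<Sum>a\<in>UNIV. exp (u a) * w a) / (\<Sum>a\<in>UNIV. exp (u a))) (at 0)"
proof -
  have "((\<lambda>t. \<Sum>a\<in>UNIV. exp (u a + t * w a)) has_real_derivative (\<Sum>a\<in>UNIV. exp (u a) * w a)) (at 0)"
    by (auto intro!: derivative_eq_intros)
  then show ?thesis using expsum_pos[of u] by (auto intro!: derivative_eq_intros)
qed

lemma sm_deriv:
  fixes u w :: "'k::finite \<Rightarrow> real"
  shows "((\<lambda>t. exp (u c + t * w c) / (\<Sum>a\<in>UNIV. exp (u a + t * w a))) has_real_derivative
     (exp (u c) / (\<Sum>a\<in>UNIV. exp (u a))) * (w c - (\<Sum>a\<in>UNIV. exp (u a) * w a) / (\<Sum>a\<in>UNIV. exp (u a)))) (at 0)"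
proof -
  have S: "(\<Sum>a\<in>UNIV. exp (u a)) > 0" by (rule expsum_pos)
  have "((\<lambda>t. exp (u c + t * w c) / (\<Sum>a\<in>UNIV. exp (u a + t * w a))) has_real_derivative
     (exp (u c) * w c * (\<Sum>a\<in>UNIV. exp (u a)) - exp (u c) * (\<Sum>a\<in>UNIV. exp (u a) * w a))
       / ((\<Sum>a\<in>UNIV. exp (u a)) * (\<Sum>a\<in>UNIV. exp (u a)))) (at 0)"
    using S by (auto intro!: derivative_eq_intros)
  moreover have "(exp (u c) * w c * (\<Sum>a\<in>UNIV. exp (u a)) - exp (u c) * (\<Sum>a\<in>UNIV. exp (u a) * w a))
       / ((\<Sum>a\<in>UNIV. exp (u a)) * (\<Sum>a\<in>UNIV. exp (u a)))
     = (exp (u c) / (\<Sum>a\<in>UNIV. exp (u a))) * (w c - (\<Sum>a\<in>UNIV. exp (u a) * w a) / (\<Sum>a\<in>UNIV. exp (u a)))"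
    using S by (simp add: field_simps)
  ultimately show ?thesis by simp
qed

lemma softmax_dir:
  "softmax (x + t *\<^sub>R v) Y c = exp ((x$c \<bullet> Y) + t * (v$c \<bullet> Y)) / (\<Sum>a\<in>UNIV. exp ((x$a \<bullet> Y) + t * (v$a \<bullet> Y)))"
  by (simp add: softmax_def inner_add_left)

lemma softmax_Ydir:
  "softmax x (Y + s *\<^sub>R axis j 1) c = exp ((x$c \<bullet> Y) + s * (x$c$j)) / (\<Sum>a\<in>UNIV. exp ((x$a \<bullet> Y) + s * (x$a$j)))"
  by (simp add: softmax_def inner_add_right inner_axis mult.commute)

lemma coord_inner: "(coord b i) $ a \<bullet> Y = (if a = b then Y $ i else 0)"
proof -
  have "coord b i $ a = (if a = b then axis i 1 else 0)" unfolding coord_def axis_def[of b] by simp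
  then show ?thesis by (simp add: inner_axis')
qed

lemma softmax_deriv_coord:
  assumes "b \<noteq> c"
  shows "((\<lambda>t. softmax (x + t *\<^sub>R coord b i) Y c) has_real_derivative
           - (softmax x Y b * softmax x Y c * Y $ i)) (at 0)"
proof -
  let ?u = "\<lambda>a. x$a \<bullet> Y" and ?w = "\<lambda>a. coord b i $ a \<bullet> Y"
  have "(\<Sum>a\<in>UNIV. exp (?u a) * ?w a) = exp (?u b) * Y $ i"
    by (simp add: coord_inner if_distrib[of "\<lambda>v. _ * v"] cong: if_cong)
  moreover have "?w c = 0" using assms by (simp add: coord_inner)
  ultimately show ?thesis
    using sm_deriv[where u="?u" and w="?w" and c=c] unfolding softmax_dir
    by (simp add: softmax_def field_simps)
qed

lemma gibbs_mean_nth: "gibbs_mean x Y $ i = (\<Sum>a\<in>UNIV. softmax x Y a * x $ a $ i)"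
  by (simp add: gibbs_mean_def)

lemma gibbs_cov_nth: "gibbs_cov x Y $ i $ j
   = (\<Sum>a\<in>UNIV. softmax x Y a * (x $ a $ i * x $ a $ j)) - gibbs_mean x Y $ i * gibbs_mean x Y $ j"
  by (simp add: gibbs_cov_def outer_def)

lemma softmax_deriv_Y:
  "((\<lambda>s. softmax x (Y + s *\<^sub>R axis j 1) a) has_real_derivative
      softmax x Y a * (x $ a $ j - gibbs_mean x Y $ j)) (at 0)"
proof -
  let ?u = "\<lambda>a. x$a \<bullet> Y" and ?w = "\<lambda>a. x$a$j"
  have "gibbs_mean x Y $ j = (\<Sum>a\<in>UNIV. exp (?u a) * ?w a) / (\<Sum>a\<in>UNIV. exp (?u a))"
    by (simp add: gibbs_mean_nth softmax_def sum_divide_distrib)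
  then show ?thesis
    using sm_deriv[where u="?u" and w="?w" and c=a] unfolding softmax_Ydir
    by (simp add: softmax_def)
qed

lemma loss_dir:
  "loss (x + t *\<^sub>R v) (axis l 1) Y = - ((x$l \<bullet> Y) + t * (v$l \<bullet> Y)) + ln (\<Sum>a\<in>UNIV. exp ((x$a \<bullet> Y) + t * (v$a \<bullet> Y)))"
proof -
  have "(\<Sum>c\<in>UNIV. axis l 1 $ c * ((x + t *\<^sub>R v) $ c \<bullet> Y)) = (x + t *\<^sub>R v) $ l \<bullet> Y"
    by (simp add: axis_def if_distrib[of "\<lambda>v. v * _"] cong: if_cong)
  then show ?thesis by (simp add: loss_def inner_add_left)
qed

lemma loss_deriv:
  "((\<lambda>t. loss (x + t *\<^sub>R coord c j) (axis l 1) Y) has_real_derivative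
      (softmax x Y c - (if l = c then 1 else 0)) * Y $ j) (at 0)"
proof -
  let ?u = "\<lambda>a. x$a \<bullet> Y" and ?w = "\<lambda>a. coord c j $ a \<bullet> Y"
  have s: "(\<Sum>a\<in>UNIV. exp (?u a) * ?w a) = exp (?u c) * Y $ j"
    by (simp add: coord_inner if_distrib[of "\<lambda>v. _ * v"] cong: if_cong)
  have D: "((\<lambda>t. - (?u l + t * ?w l) + ln (\<Sum>a\<in>UNIV. exp (?u a + t * ?w a))) has_real_derivative
          - ?w l + (\<Sum>a\<in>UNIV. exp (?u a) * ?w a) / (\<Sum>a\<in>UNIV. exp (?u a))) (at 0)"
  proof (rule DERIV_add[OF _ lse_deriv])
    show "((\<lambda>t. - (?u l + t * ?w l)) has_real_derivative - ?w l) (at 0)"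
      by (auto intro!: derivative_eq_intros)
  qed
  have v: "- ?w l + (\<Sum>a\<in>UNIV. exp (?u a) * ?w a) / (\<Sum>a\<in>UNIV. exp (?u a))
     = (softmax x Y c - (if l = c then 1 else 0)) * Y $ j"
    unfolding s by (simp add: softmax_def coord_inner algebra_simps)
  show ?thesis using D unfolding loss_dir v .
qed

lemma gm_deriv:
  "((\<lambda>s. gibbs_mean x (Y + s *\<^sub>R axis j 1) $ i) has_real_derivative gibbs_cov x Y $ i $ j) (at 0)"
proof -
  have "((\<lambda>s. \<Sum>a\<in>UNIV. softmax x (Y + s *\<^sub>R axis j 1) a * x $ a $ i) has_real_derivative
          (\<Sum>a\<in>UNIV. softmax x Y a * (x $ a $ j - gibbs_mean x Y $ j) * x $ a $ i)) (at 0)"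
    by (intro DERIV_sum DERIV_cmult_right softmax_deriv_Y)
  moreover have "(\<Sum>a\<in>UNIV. softmax x Y a * (x $ a $ j - gibbs_mean x Y $ j) * x $ a $ i) = gibbs_cov x Y $ i $ j"
    unfolding gibbs_cov_nth gibbs_mean_nth[of x Y i]
    by (simp add: algebra_simps sum_subtractf sum_distrib_left sum_distrib_right)
  ultimately show ?thesis unfolding gibbs_mean_nth by simp
qed

definition Rx :: "real^'d^'k::finite \<Rightarrow> real" where
  "Rx x = (\<Sum>a\<in>UNIV. norm (x $ a))"

lemma Rx_nonneg: "Rx x \<ge> 0" unfolding Rx_def by (simp add: sum_nonneg)

lemma norm_le_Rx: "norm (x $ a) \<le> Rx x"
  unfolding Rx_def by (rule member_le_sum) auto

lemma comp_le_Rx: "\<bar>x $ a $ i\<bar> \<le> Rx x"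
  using component_le_norm_cart[of "x $ a" i] norm_le_Rx[of x a] by linarith

lemma softmax_nonneg: "softmax x Y a \<ge> 0"
  unfolding softmax_def by (simp add: sum_nonneg)

lemma softmax_sum: "(\<Sum>a\<in>UNIV. softmax x Y a) = 1"
  unfolding softmax_def using expsum_pos[of "\<lambda>a. x $ a \<bullet> Y"]
  by (simp add: sum_divide_distrib[symmetric])

lemma softmax_le1: "softmax x Y a \<le> 1"
proof -
  have "softmax x Y a \<le> (\<Sum>a\<in>UNIV. softmax x Y a)"
    by (rule member_le_sum) (auto simp: softmax_nonneg)
  then show ?thesis by (simp add: softmax_sum)
qed

lemma softmax_abs_le1: "\<bar>softmax x Y a\<bar> \<le> 1"
  using softmax_nonneg[of x Y a] softmax_le1[of x Y a] by simp

lemma gm_bound: "\<bar>gibbs_mean x Y $ i\<bar> \<le> Rx x"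
proof -
  have "\<bar>gibbs_mean x Y $ i\<bar> \<le> (\<Sum>a\<in>UNIV. \<bar>softmax x Y a * x $ a $ i\<bar>)"
    unfolding gibbs_mean_nth by (rule sum_abs)
  also have "\<dots> \<le> (\<Sum>a\<in>UNIV. softmax x Y a * Rx x)"
    by (intro sum_mono) (simp add: abs_mult softmax_nonneg mult_left_mono comp_le_Rx)
  also have "\<dots> = Rx x" by (simp add: sum_distrib_right[symmetric] softmax_sum)
  finally show ?thesis .
qed

lemma gc_bound: "\<bar>gibbs_cov x Y $ i $ j\<bar> \<le> 2 * (Rx x)\<^sup>2"
proof -
  have "\<bar>\<Sum>a\<in>UNIV. softmax x Y a * (x $ a $ i * x $ a $ j)\<bar> \<le> (\<Sum>a\<in>UNIV. \<bar>softmax x Y a * (x $ a $ i * x $ a $ j)\<bar>)"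
    by (rule sum_abs)
  also have "\<dots> \<le> (\<Sum>a\<in>UNIV. softmax x Y a * (Rx x * Rx x))"
  proof (intro sum_mono)
    fix a
    have "\<bar>x $ a $ i\<bar> * \<bar>x $ a $ j\<bar> \<le> Rx x * Rx x"
      using Rx_nonneg[of x] by (intro mult_mono comp_le_Rx) auto
    then show "\<bar>softmax x Y a * (x $ a $ i * x $ a $ j)\<bar> \<le> softmax x Y a * (Rx x * Rx x)"
      by (simp add: abs_mult softmax_nonneg mult_left_mono)
  qed
  also have "\<dots> = (Rx x)\<^sup>2" by (simp add: sum_distrib_right[symmetric] softmax_sum power2_eq_square)
  finally have 1: "\<bar>\<Sum>a\<in>UNIV. softmax x Y a * (x $ a $ i * x $ a $ j)\<bar> \<le> (Rx x)\<^sup>2" .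
  have 2: "\<bar>gibbs_mean x Y $ i * gibbs_mean x Y $ j\<bar> \<le> (Rx x)\<^sup>2"
    unfolding abs_mult power2_eq_square using Rx_nonneg[of x] by (intro mult_mono gm_bound) auto
  show ?thesis unfolding gibbs_cov_nth using 1 2 by linarith
qed

lemma loss_bound:
  "\<bar>loss x (axis l 1) Y\<bar> \<le> \<bar>ln (real CARD('k))\<bar> + 2 * Rx x * norm Y" for x :: "real^'d^'k::finite"
proof -
  let ?S = "\<Sum>a\<in>UNIV. exp (x $ a \<bullet> Y)"
  have S: "?S > 0" by (rule expsum_pos)
  have lo: "exp (x $ l \<bullet> Y) \<le> ?S" by (rule member_le_sum) auto
  then have "x $ l \<bullet> Y \<le> ln ?S" using S by (metis ln_exp ln_le_cancel_iff exp_gt_zero)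
  have in_le: "\<bar>x $ a \<bullet> Y\<bar> \<le> Rx x * norm Y" for a
    using Cauchy_Schwarz_ineq2[of "x $ a" Y] norm_le_Rx[of x a]
    by (meson mult_right_mono norm_ge_zero order_trans)
  have "?S \<le> (\<Sum>a\<in>(UNIV::'k set). exp (Rx x * norm Y))"
    by (intro sum_mono) (use in_le in \<open>auto simp: abs_le_iff\<close>)
  also have "\<dots> = real CARD('k) * exp (Rx x * norm Y)" by simp
  finally have "ln ?S \<le> ln (real CARD('k) * exp (Rx x * norm Y))"
    using S by simp
  also have "\<dots> = ln (real CARD('k)) + Rx x * norm Y" by (simp add: ln_mult)
  finally have up: "ln ?S \<le> ln (real CARD('k)) + Rx x * norm Y" .
  have "(\<Sum>c\<in>UNIV. axis l 1 $ c * (x $ c \<bullet> Y)) = x $ l \<bullet> Y"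
    by (simp add: axis_def if_distrib[of "\<lambda>v. v * _"] cong: if_cong)
  then have L: "loss x (axis l 1) Y = - (x $ l \<bullet> Y) + ln ?S" by (simp add: loss_def)
  show ?thesis unfolding L using \<open>x $ l \<bullet> Y \<le> ln ?S\<close> up in_le[of l] by (simp add: abs_le_iff)
qed

lemma gm_int:
  fixes f :: "real^'d \<Rightarrow> real"
  assumes lam: "lam > 0" and fm: "f \<in> borel_measurable borel"
    and bnd: "\<And>z. \<bar>f z\<bar> \<le> A + B * norm z + C * (norm z)\<^sup>2"
  shows "integrable (gauss_meas lam) f"
proof (rule gauss_meas_integrable[OF lam fm, where C="\<bar>A\<bar> + \<bar>B\<bar> + \<bar>C\<bar>"])
  fix z :: "real^'d"
  let ?s = "norm z"
  have s: "?s \<ge> 0" by simp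
  have "A + B * ?s + C * ?s\<^sup>2 \<le> \<bar>A\<bar> + \<bar>B\<bar> * ?s + \<bar>C\<bar> * ?s\<^sup>2"
    by (intro add_mono mult_right_mono) auto
  also have "\<dots> \<le> (\<bar>A\<bar> + \<bar>B\<bar> + \<bar>C\<bar>) * (1 + ?s)\<^sup>2"
    using s by (simp add: power2_eq_square algebra_simps add_nonneg_nonneg mult_nonneg_nonneg)
  finally show "norm (f z) \<le> (\<bar>A\<bar> + \<bar>B\<bar> + \<bar>C\<bar>) * (1 + norm z)\<^sup>2" using bnd[of z] by simp
qed

lemma loss_meas[measurable (raw)]:
  assumes [measurable]: "g \<in> borel_measurable M"
  shows "(\<lambda>z. loss x y (g z)) \<in> borel_measurable M"
  unfolding loss_def by measurable

definition gfun :: "('k::finite \<Rightarrow> real) \<Rightarrow> ('k \<Rightarrow> real^'d) \<Rightarrow> real \<Rightarrow> 'k \<Rightarrow> 'd \<Rightarrow> real^'d^'k \<Rightarrow> real" where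
  "gfun p mu lam c j y = (\<Sum>l\<in>UNIV. p l * (\<integral>z. (softmax y (mu l + z) c - (if l = c then 1 else 0)) * (mu l + z) $ j \<partial>gauss_meas lam))"

lemma abs_sm_ind: "\<bar>softmax x Y c - (if l = c then 1 else 0)\<bar> \<le> 1"
  using softmax_nonneg[of x Y c] softmax_le1[of x Y c] by auto

lemma comp_le_norm_add: "\<bar>(m + z) $ j\<bar> \<le> norm m + norm (z::real^'d)"
  using component_le_norm_cart[of "m + z" j] norm_triangle_ineq[of m z] by linarith

lemma Phi_deriv:
  fixes p :: "'k::finite \<Rightarrow> real" and mu :: "'k \<Rightarrow> real^'d"
  assumes lam: "lam > 0"
  shows "((\<lambda>t. Phi p mu lam (y + t *\<^sub>R coord c j)) has_real_derivative gfun p mu lam c j y) (at 0)"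
  unfolding Phi_def gfun_def
proof (intro DERIV_sum DERIV_cmult)
  fix l
  let ?v = "coord c j :: real^'d^'k"
  have "((\<lambda>t. \<integral>z. loss (y + t *\<^sub>R ?v) (axis l 1) (mu l + z) \<partial>gauss_meas lam) has_real_derivative
      (\<integral>z. (softmax (y + 0 *\<^sub>R ?v) (mu l + z) c - (if l = c then 1 else 0)) * (mu l + z) $ j \<partial>gauss_meas lam)) (at 0)"
  proof (rule DUI[where G="\<lambda>z. norm (mu l) + norm z"
      and f="\<lambda>t z. loss (y + t *\<^sub>R ?v) (axis l 1) (mu l + z)"
      and f'="\<lambda>t z. (softmax (y + t *\<^sub>R ?v) (mu l + z) c - (if l = c then 1 else 0)) * (mu l + z) $ j"])
    show "((\<lambda>s. loss (y + s *\<^sub>R ?v) (axis l 1) (mu l + z)) has_real_derivative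
        (softmax (y + t *\<^sub>R ?v) (mu l + z) c - (if l = c then 1 else 0)) * (mu l + z) $ j) (at t)" for t z
    proof -
      have "((\<lambda>s. loss ((y + t *\<^sub>R ?v) + s *\<^sub>R ?v) (axis l 1) (mu l + z)) has_real_derivative
        (softmax (y + t *\<^sub>R ?v) (mu l + z) c - (if l = c then 1 else 0)) * (mu l + z) $ j) (at 0)"
        by (rule loss_deriv)
      then have "((\<lambda>s. loss (y + (s + t) *\<^sub>R ?v) (axis l 1) (mu l + z)) has_real_derivative
        (softmax (y + t *\<^sub>R ?v) (mu l + z) c - (if l = c then 1 else 0)) * (mu l + z) $ j) (at 0)"
        by (simp add: scaleR_add_left add.assoc add.commute add.left_commute)
      then show ?thesis using DERIV_shift[of "\<lambda>s. loss (y + s *\<^sub>R ?v) (axis l 1) (mu l + z)" _ 0 t] by simp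
    qed
    show "(\<lambda>z. loss (y + t *\<^sub>R ?v) (axis l 1) (mu l + z)) \<in> borel_measurable (gauss_meas lam)" for t
      by (rule meas_gauss_meas) measurable
    show "(\<lambda>z. (softmax (y + 0 *\<^sub>R ?v) (mu l + z) c - (if l = c then 1 else 0)) * (mu l + z) $ j)
        \<in> borel_measurable (gauss_meas lam)"
      by (rule meas_gauss_meas) measurable
    show "integrable (gauss_meas lam) (\<lambda>z. loss (y + 0 *\<^sub>R ?v) (axis l 1) (mu l + z))"
    proof (rule gm_int[OF lam, where A="\<bar>ln (real CARD('k))\<bar> + 2 * Rx y * norm (mu l)" and B="2 * Rx y" and C=0])
      show "(\<lambda>z. loss (y + 0 *\<^sub>R ?v) (axis l 1) (mu l + z)) \<in> borel_measurable borel" by measurable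
      fix z :: "real^'d"
      have "\<bar>loss y (axis l 1) (mu l + z)\<bar> \<le> \<bar>ln (real CARD('k))\<bar> + 2 * Rx y * norm (mu l + z)"
        by (rule loss_bound)
      also have "\<dots> \<le> \<bar>ln (real CARD('k))\<bar> + 2 * Rx y * (norm (mu l) + norm z)"
        using Rx_nonneg[of y] norm_triangle_ineq[of "mu l" z] by (intro add_left_mono mult_left_mono) auto
      finally show "\<bar>loss (y + 0 *\<^sub>R ?v) (axis l 1) (mu l + z)\<bar>
          \<le> \<bar>ln (real CARD('k))\<bar> + 2 * Rx y * norm (mu l) + 2 * Rx y * norm z + 0 * (norm z)\<^sup>2"
        by (simp add: algebra_simps)
    qed
    show "integrable (gauss_meas lam) (\<lambda>z::real^'d. norm (mu l) + norm z)"
      by (rule gm_int[OF lam, where A="norm (mu l)" and B=1 and C=0]) auto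
    show "\<bar>(softmax (y + t *\<^sub>R ?v) (mu l + z) c - (if l = c then 1 else 0)) * (mu l + z) $ j\<bar>
        \<le> norm (mu l) + norm z" for t z
    proof -
      have "\<bar>(softmax (y + t *\<^sub>R ?v) (mu l + z) c - (if l = c then 1 else 0)) * (mu l + z) $ j\<bar>
          \<le> 1 * (norm (mu l) + norm z)"
        unfolding abs_mult by (intro mult_mono abs_sm_ind comp_le_norm_add) auto
      then show ?thesis by simp
    qed
  qed
  then show "((\<lambda>t. \<integral>z. loss (y + t *\<^sub>R ?v) (axis l 1) (mu l + z) \<partial>gauss_meas lam) has_real_derivative
      (\<integral>z. (softmax y (mu l + z) c - (if l = c then 1 else 0)) * (mu l + z) $ j \<partial>gauss_meas lam)) (at 0)"
    by simp
qed

lemma g_deriv: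
  fixes p :: "'k::finite \<Rightarrow> real" and mu :: "'k \<Rightarrow> real^'d"
  assumes lam: "lam > 0" and bc: "b \<noteq> c"
  shows "((\<lambda>t. gfun p mu lam c j (x + t *\<^sub>R coord b i)) has_real_derivative
     (\<Sum>l\<in>UNIV. p l * (\<integral>z. - (softmax x (mu l + z) b * softmax x (mu l + z) c * (mu l + z) $ i) * (mu l + z) $ j \<partial>gauss_meas lam))) (at 0)"
  unfolding gfun_def
proof (intro DERIV_sum DERIV_cmult)
  fix l
  let ?v = "coord b i :: real^'d^'k"
  have "((\<lambda>t. \<integral>z. (softmax (x + t *\<^sub>R ?v) (mu l + z) c - (if l = c then 1 else 0)) * (mu l + z) $ j \<partial>gauss_meas lam)
      has_real_derivative
      (\<integral>z. - (softmax (x + 0 *\<^sub>R ?v) (mu l + z) b * softmax (x + 0 *\<^sub>R ?v) (mu l + z) c * (mu l + z) $ i) * (mu l + z) $ j \<partial>gauss_meas lam)) (at 0)"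
  proof (rule DUI[where G="\<lambda>z. (norm (mu l) + norm z)\<^sup>2"
      and f="\<lambda>t z. (softmax (x + t *\<^sub>R ?v) (mu l + z) c - (if l = c then 1 else 0)) * (mu l + z) $ j"
      and f'="\<lambda>t z. - (softmax (x + t *\<^sub>R ?v) (mu l + z) b * softmax (x + t *\<^sub>R ?v) (mu l + z) c * (mu l + z) $ i) * (mu l + z) $ j"])
    show "((\<lambda>s. (softmax (x + s *\<^sub>R ?v) (mu l + z) c - (if l = c then 1 else 0)) * (mu l + z) $ j) has_real_derivative
        - (softmax (x + t *\<^sub>R ?v) (mu l + z) b * softmax (x + t *\<^sub>R ?v) (mu l + z) c * (mu l + z) $ i) * (mu l + z) $ j) (at t)" for t z
    proof -
      have "((\<lambda>s. softmax ((x + t *\<^sub>R ?v) + s *\<^sub>R ?v) (mu l + z) c) has_real_derivative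
        - (softmax (x + t *\<^sub>R ?v) (mu l + z) b * softmax (x + t *\<^sub>R ?v) (mu l + z) c * (mu l + z) $ i)) (at 0)"
        by (rule softmax_deriv_coord[OF bc])
      then have "((\<lambda>s. softmax (x + (s + t) *\<^sub>R ?v) (mu l + z) c) has_real_derivative
        - (softmax (x + t *\<^sub>R ?v) (mu l + z) b * softmax (x + t *\<^sub>R ?v) (mu l + z) c * (mu l + z) $ i)) (at 0)"
        by (simp add: scaleR_add_left add.assoc add.commute add.left_commute)
      then have "((\<lambda>s. softmax (x + s *\<^sub>R ?v) (mu l + z) c) has_real_derivative
        - (softmax (x + t *\<^sub>R ?v) (mu l + z) b * softmax (x + t *\<^sub>R ?v) (mu l + z) c * (mu l + z) $ i)) (at t)"
        using DERIV_shift[of "\<lambda>s. softmax (x + s *\<^sub>R ?v) (mu l + z) c" _ 0 t] by simp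
      then show ?thesis by (auto intro!: derivative_eq_intros)
    qed
    show "(\<lambda>z. (softmax (x + t *\<^sub>R ?v) (mu l + z) c - (if l = c then 1 else 0)) * (mu l + z) $ j) \<in> borel_measurable (gauss_meas lam)" for t
      by (rule meas_gauss_meas) measurable
    show "(\<lambda>z. - (softmax (x + 0 *\<^sub>R ?v) (mu l + z) b * softmax (x + 0 *\<^sub>R ?v) (mu l + z) c * (mu l + z) $ i) * (mu l + z) $ j)
        \<in> borel_measurable (gauss_meas lam)"
      by (rule meas_gauss_meas) measurable
    show "integrable (gauss_meas lam) (\<lambda>z. (softmax (x + 0 *\<^sub>R ?v) (mu l + z) c - (if l = c then 1 else 0)) * (mu l + z) $ j)"
    proof (rule gm_int[OF lam, where A="norm (mu l)" and B=1 and C=0])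
      show "(\<lambda>z. (softmax (x + 0 *\<^sub>R ?v) (mu l + z) c - (if l = c then 1 else 0)) * (mu l + z) $ j) \<in> borel_measurable borel"
        by measurable
      fix z :: "real^'d"
      have "\<bar>(softmax (x + 0 *\<^sub>R ?v) (mu l + z) c - (if l = c then 1 else 0)) * (mu l + z) $ j\<bar>
          \<le> 1 * (norm (mu l) + norm z)"
        unfolding abs_mult by (intro mult_mono abs_sm_ind comp_le_norm_add) auto
      then show "\<bar>(softmax (x + 0 *\<^sub>R ?v) (mu l + z) c - (if l = c then 1 else 0)) * (mu l + z) $ j\<bar>
          \<le> norm (mu l) + 1 * norm z + 0 * (norm z)\<^sup>2" by simp
    qed
    show "integrable (gauss_meas lam) (\<lambda>z::real^'d. (norm (mu l) + norm z)\<^sup>2)"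
      by (rule gm_int[OF lam, where A="(norm (mu l))\<^sup>2" and B="2 * norm (mu l)" and C=1])
         (auto simp: power2_eq_square algebra_simps)
    show "\<bar>- (softmax (x + t *\<^sub>R ?v) (mu l + z) b * softmax (x + t *\<^sub>R ?v) (mu l + z) c * (mu l + z) $ i) * (mu l + z) $ j\<bar>
        \<le> (norm (mu l) + norm z)\<^sup>2" for t z
    proof -
      let ?sb = "softmax (x + t *\<^sub>R ?v) (mu l + z) b" and ?sc = "softmax (x + t *\<^sub>R ?v) (mu l + z) c"
      have "\<bar>?sb * ?sc\<bar> \<le> 1 * 1"
        unfolding abs_mult by (intro mult_mono softmax_abs_le1) auto
      then have "\<bar>?sb * ?sc * (mu l + z) $ i * (mu l + z) $ j\<bar> \<le> 1 * (norm (mu l) + norm z) * (norm (mu l) + norm z)"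
        unfolding abs_mult by (intro mult_mono comp_le_norm_add) (auto simp: abs_mult)
      then show ?thesis by (simp add: power2_eq_square abs_mult)
    qed
  qed
  then show "((\<lambda>t. \<integral>z. (softmax (x + t *\<^sub>R ?v) (mu l + z) c - (if l = c then 1 else 0)) * (mu l + z) $ j \<partial>gauss_meas lam)
      has_real_derivative
      (\<integral>z. - (softmax x (mu l + z) b * softmax x (mu l + z) c * (mu l + z) $ i) * (mu l + z) $ j \<partial>gauss_meas lam)) (at 0)"
    by simp
qed

definition Fm :: "real \<Rightarrow> real^'d^'k::finite \<Rightarrow> real^'d \<Rightarrow> 'k \<Rightarrow> 'k \<Rightarrow> real^'d \<Rightarrow> real^'d^'d" where
  "Fm lam x m b c Y = (softmax x Y b * softmax x Y c) *\<^sub>R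
     (outer (m + (1 / lam) *\<^sub>R (x $ b + x $ c - 2 *\<^sub>R gibbs_mean x Y))
            (m + (1 / lam) *\<^sub>R (x $ b + x $ c - 2 *\<^sub>R gibbs_mean x Y))
      + (1 / lam) *\<^sub>R mat 1 - (2 / lam\<^sup>2) *\<^sub>R gibbs_cov x Y)"

lemma Fm_nth: "Fm lam x m b c Y $ i $ j = (softmax x Y b * softmax x Y c) *
   ((m $ i + (1 / lam) * (x $ b $ i + x $ c $ i - 2 * gibbs_mean x Y $ i)) *
    (m $ j + (1 / lam) * (x $ b $ j + x $ c $ j - 2 * gibbs_mean x Y $ j))
    + (1 / lam) * (if i = j then 1 else 0) - (2 / lam\<^sup>2) * gibbs_cov x Y $ i $ j)"
  by (simp add: Fm_def outer_def mat_def)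

lemma Fm_meas[measurable (raw)]:
  assumes [measurable]: "g \<in> borel_measurable M"
  shows "(\<lambda>z. Fm lam x m b c (g z)) \<in> borel_measurable M"
  unfolding Fm_def by measurable

lemma int_lin2:
  fixes f g :: "'a \<Rightarrow> real"
  assumes "integrable M f" "integrable M g"
  shows "(\<integral>z. a * f z + b * g z \<partial>M) = a * (\<integral>z. f z \<partial>M) + b * (\<integral>z. g z \<partial>M)"
  using assms by simp

lemma int_lin4:
  fixes f1 f2 f3 f4 :: "'a \<Rightarrow> real"
  assumes "integrable M f1" "integrable M f2" "integrable M f3" "integrable M f4"
  shows "(\<integral>z. a1 * f1 z + a2 * f2 z + a3 * f3 z + a4 * f4 z \<partial>M)
    = a1 * (\<integral>z. f1 z \<partial>M) + a2 * (\<integral>z. f2 z \<partial>M) + a3 * (\<integral>z. f3 z \<partial>M) + a4 * (\<integral>z. f4 z \<partial>M)"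
  using assms by simp

lemma int_lin6:
  fixes f1 f2 f3 f4 f5 f6 :: "'a \<Rightarrow> real"
  assumes "integrable M f1" "integrable M f2" "integrable M f3" "integrable M f4" "integrable M f5" "integrable M f6"
  shows "(\<integral>z. a1 * f1 z + a2 * f2 z + a3 * f3 z + a4 * f4 z + a5 * f5 z + a6 * f6 z \<partial>M)
    = a1 * (\<integral>z. f1 z \<partial>M) + a2 * (\<integral>z. f2 z \<partial>M) + a3 * (\<integral>z. f3 z \<partial>M) + a4 * (\<integral>z. f4 z \<partial>M)
      + a5 * (\<integral>z. f5 z \<partial>M) + a6 * (\<integral>z. f6 z \<partial>M)"
  using assms by simp

lemma stein_block:
  fixes x :: "real^'d^'k::finite" and m :: "real^'d"
  assumes lam: "lam > 0"
  shows "(\<integral>z. softmax x (m + z) b * softmax x (m + z) c * (m + z) $ i * (m + z) $ j \<partial>gauss_meas lam)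
       = (\<integral>z. Fm lam x m b c (m + z) $ i $ j \<partial>gauss_meas lam)"
proof -
  define h where "h z = softmax x (m + z) b * softmax x (m + z) c" for z
  define vv where "vv k z = x $ b $ k + x $ c $ k - 2 * gibbs_mean x (m + z) $ k" for k z
  define cv where "cv z = gibbs_cov x (m + z) $ i $ j" for z
  define Q where "Q = 1 + 4 * Rx x"
  let ?I = "\<lambda>f. \<integral>z. f z \<partial>gauss_meas lam"
  let ?d = "axis i (1::real) $ j"
  have Q1: "Q \<ge> 1" unfolding Q_def using Rx_nonneg[of x] by simp
  have hm[measurable]: "h \<in> borel_measurable borel" unfolding h_def by measurable
  have vm[measurable]: "vv k \<in> borel_measurable borel" for k unfolding vv_def by measurable
  have cm[measurable]: "cv \<in> borel_measurable borel" unfolding cv_def by measurable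
  have hb: "\<bar>h z\<bar> \<le> 1" for z
    unfolding h_def abs_mult using softmax_abs_le1 by (metis mult_le_one abs_ge_zero)
  have vb: "\<bar>vv k z\<bar> \<le> Q" for k z
    unfolding vv_def Q_def
    using comp_le_Rx[of x b k] comp_le_Rx[of x c k] gm_bound[of x "m + z" k] by linarith
  have cb: "\<bar>cv z\<bar> \<le> Q\<^sup>2" for z
  proof -
    have "2 * (Rx x)\<^sup>2 \<le> Q\<^sup>2" unfolding Q_def using Rx_nonneg[of x]
      by (simp add: power2_eq_square algebra_simps)
    then show ?thesis unfolding cv_def using gc_bound[of x "m + z" i j] by linarith
  qed
  have zb: "\<bar>z $ k\<bar> \<le> norm z" for z :: "real^'d" and k by (rule component_le_norm_cart)
  have db: "\<bar>axis k (1::real) $ l\<bar> \<le> 1" for k l :: 'd by (simp add: axis_def)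
  have shift: "m + (z + s *\<^sub>R axis k 1) = (m + z) + s *\<^sub>R axis k 1" for z :: "real^'d" and s k
    by (simp add: add.assoc)
  have dh: "((\<lambda>s. h (z + s *\<^sub>R axis k 1)) has_real_derivative h z * vv k z) (at 0)" for z k
  proof -
    have "((\<lambda>s. softmax x ((m + z) + s *\<^sub>R axis k 1) b * softmax x ((m + z) + s *\<^sub>R axis k 1) c)
        has_real_derivative
        softmax x (m + z) b * (x $ b $ k - gibbs_mean x (m + z) $ k) * softmax x (m + z) c
        + softmax x (m + z) b * (softmax x (m + z) c * (x $ c $ k - gibbs_mean x (m + z) $ k))) (at 0)"
      using DERIV_mult'[OF softmax_deriv_Y[of x "m + z" k b] softmax_deriv_Y[of x "m + z" k c]]
      by (simp add: algebra_simps)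
    then show ?thesis unfolding h_def vv_def shift by (simp add: algebra_simps)
  qed
  have dv: "((\<lambda>s. vv i (z + s *\<^sub>R axis j 1)) has_real_derivative - 2 * cv z) (at 0)" for z
  proof -
    have "((\<lambda>s. x $ b $ i + x $ c $ i - 2 * gibbs_mean x ((m + z) + s *\<^sub>R axis j 1) $ i)
        has_real_derivative 0 - 2 * gibbs_cov x (m + z) $ i $ j) (at 0)"
      by (intro DERIV_diff DERIV_cmult gm_deriv DERIV_const)
    then show ?thesis unfolding vv_def cv_def shift by simp
  qed
  have dz: "((\<lambda>s. (z + s *\<^sub>R axis k 1) $ l) has_real_derivative axis k 1 $ l) (at 0)" for z :: "real^'d" and k l
    by (auto intro!: derivative_eq_intros)
  have st: "?I (\<lambda>z. \<phi> z * z $ k) = (1 / lam) * ?I \<phi>'"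
    if "\<And>z. ((\<lambda>s. \<phi> (z + s *\<^sub>R axis k 1)) has_real_derivative \<phi>' z) (at 0)"
      "\<phi> \<in> borel_measurable borel" "\<phi>' \<in> borel_measurable borel"
      "\<And>z. \<bar>\<phi> z\<bar> \<le> 3 * Q\<^sup>2 + Q * norm z" "\<And>z. \<bar>\<phi>' z\<bar> \<le> 3 * Q\<^sup>2 + Q * norm z"
    for \<phi> \<phi>' :: "real^'d \<Rightarrow> real" and k
    by (rule stein[OF lam that])
  have QQ: "Q \<le> Q * Q" using mult_left_mono[of 1 Q Q] Q1 by simp
  have Q2: "Q \<le> 3 * Q\<^sup>2" "1 \<le> 3 * Q\<^sup>2" using QQ Q1 unfolding power2_eq_square by linarith+
  have S1: "?I (\<lambda>z. h z * z $ k) = (1 / lam) * ?I (\<lambda>z. h z * vv k z)" for k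
  proof (rule st)
    show "((\<lambda>s. h (z + s *\<^sub>R axis k 1)) has_real_derivative h z * vv k z) (at 0)" for z by (rule dh)
    show "\<bar>h z\<bar> \<le> 3 * Q\<^sup>2 + Q * norm z" for z
      using hb[of z] Q2 Q1 by (smt (verit) mult_nonneg_nonneg norm_ge_zero)
    show "\<bar>h z * vv k z\<bar> \<le> 3 * Q\<^sup>2 + Q * norm z" for z
    proof -
      have "\<bar>h z * vv k z\<bar> \<le> 1 * Q" unfolding abs_mult by (intro mult_mono hb vb) auto
      then show ?thesis using Q2 Q1 by (smt (verit) mult_nonneg_nonneg norm_ge_zero)
    qed
  qed measurable
  have S2: "?I (\<lambda>z. h z * z $ j * z $ i) = (1 / lam) * ?I (\<lambda>z. h z * vv i z * z $ j + h z * ?d)"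
  proof (rule st)
    show "((\<lambda>s. h (z + s *\<^sub>R axis i 1) * (z + s *\<^sub>R axis i 1) $ j) has_real_derivative
        h z * vv i z * z $ j + h z * ?d) (at 0)" for z
      using DERIV_mult[OF dh[of z i] dz[of z i j]] by (simp add: algebra_simps)
    show "\<bar>h z * z $ j\<bar> \<le> 3 * Q\<^sup>2 + Q * norm z" for z
    proof -
      have "\<bar>h z * z $ j\<bar> \<le> 1 * norm z" unfolding abs_mult by (intro mult_mono hb zb) auto
      also have "\<dots> \<le> Q * norm z" using Q1 by (intro mult_right_mono) auto
      finally show ?thesis using Q2 by linarith
    qed
    show "\<bar>h z * vv i z * z $ j + h z * ?d\<bar> \<le> 3 * Q\<^sup>2 + Q * norm z" for z
    proof -
      have "\<bar>h z * vv i z * z $ j\<bar> \<le> 1 * Q * norm z" unfolding abs_mult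
        using Q1 by (intro mult_mono hb vb zb) auto
      moreover have "\<bar>h z * ?d\<bar> \<le> 1 * 1" unfolding abs_mult by (intro mult_mono hb db) auto
      ultimately show ?thesis using Q2 by (smt (verit))
    qed
  qed measurable
  have S3: "?I (\<lambda>z. h z * vv i z * z $ j) = (1 / lam) * ?I (\<lambda>z. h z * vv j z * vv i z + h z * (- 2 * cv z))"
  proof (rule st)
    show "((\<lambda>s. h (z + s *\<^sub>R axis j 1) * vv i (z + s *\<^sub>R axis j 1)) has_real_derivative
        h z * vv j z * vv i z + h z * (- 2 * cv z)) (at 0)" for z
      using DERIV_mult[OF dh[of z j] dv[of z]] by (simp add: algebra_simps)
    show "\<bar>h z * vv i z\<bar> \<le> 3 * Q\<^sup>2 + Q * norm z" for z
    proof -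
      have "\<bar>h z * vv i z\<bar> \<le> 1 * Q" unfolding abs_mult by (intro mult_mono hb vb) auto
      then show ?thesis using Q2 Q1 by (smt (verit) mult_nonneg_nonneg norm_ge_zero)
    qed
    show "\<bar>h z * vv j z * vv i z + h z * (- 2 * cv z)\<bar> \<le> 3 * Q\<^sup>2 + Q * norm z" for z
    proof -
      have "\<bar>h z * vv j z * vv i z\<bar> \<le> 1 * Q * Q" unfolding abs_mult
        by (intro mult_mono hb vb) (auto simp: order_trans[OF _ vb])
      moreover have "\<bar>h z * (- 2 * cv z)\<bar> \<le> 1 * (2 * Q\<^sup>2)" unfolding abs_mult
        using cb[of z] by (intro mult_mono hb) auto
      ultimately show ?thesis using Q1 by (simp add: power2_eq_square) (smt (verit) mult_nonneg_nonneg norm_ge_zero)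
    qed
  qed measurable
  have int: "integrable (gauss_meas lam) f" if "f \<in> borel_measurable borel" "\<And>z. \<bar>f z\<bar> \<le> A + B * norm z + C * (norm z)\<^sup>2"
    for f :: "real^'d \<Rightarrow> real" and A B C
    by (rule gm_int[OF lam that])
  have i_h: "integrable (gauss_meas lam) h"
    by (rule gm_int[OF lam, where A=1 and B=0 and C=0]) (use hb in auto)
  have i_hv: "integrable (gauss_meas lam) (\<lambda>z. h z * vv k z)" for k
  proof (rule gm_int[OF lam, where A=Q and B=0 and C=0])
    show "\<bar>h z * vv k z\<bar> \<le> Q + 0 * norm z + 0 * (norm z)\<^sup>2" for z
      using mult_mono[OF hb vb] by (simp add: abs_mult)
  qed measurable
  have i_hvv: "integrable (gauss_meas lam) (\<lambda>z. h z * vv j z * vv i z)"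
  proof (rule gm_int[OF lam, where A="Q*Q" and B=0 and C=0])
    show "\<bar>h z * vv j z * vv i z\<bar> \<le> Q * Q + 0 * norm z + 0 * (norm z)\<^sup>2" for z
      using mult_mono[OF mult_mono[OF hb vb] vb] Q1 by (simp add: abs_mult)
  qed measurable
  have i_hc: "integrable (gauss_meas lam) (\<lambda>z. h z * cv z)"
  proof (rule gm_int[OF lam, where A="Q\<^sup>2" and B=0 and C=0])
    show "\<bar>h z * cv z\<bar> \<le> Q\<^sup>2 + 0 * norm z + 0 * (norm z)\<^sup>2" for z
      using mult_mono[OF hb cb] by (simp add: abs_mult)
  qed measurable
  have i_hz: "integrable (gauss_meas lam) (\<lambda>z. h z * z $ k)" for k
  proof (rule gm_int[OF lam, where A=0 and B=1 and C=0])
    show "\<bar>h z * z $ k\<bar> \<le> 0 + 1 * norm z + 0 * (norm z)\<^sup>2" for z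
      using mult_mono[OF hb zb] by (simp add: abs_mult)
  qed measurable
  have i_hzz: "integrable (gauss_meas lam) (\<lambda>z. h z * z $ j * z $ i)"
  proof (rule gm_int[OF lam, where A=0 and B=0 and C=1])
    show "\<bar>h z * z $ j * z $ i\<bar> \<le> 0 + 0 * norm z + 1 * (norm z)\<^sup>2" for z
      using mult_mono[OF mult_mono[OF hb zb] zb] by (simp add: abs_mult power2_eq_square)
  qed measurable
  have i_hvz: "integrable (gauss_meas lam) (\<lambda>z. h z * vv i z * z $ j)"
  proof (rule gm_int[OF lam, where A=0 and B=Q and C=0])
    show "\<bar>h z * vv i z * z $ j\<bar> \<le> 0 + Q * norm z + 0 * (norm z)\<^sup>2" for z
      using mult_mono[OF mult_mono[OF hb vb] zb] Q1 by (simp add: abs_mult)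
  qed measurable
  have S2': "?I (\<lambda>z. h z * vv i z * z $ j + h z * ?d) = ?I (\<lambda>z. h z * vv i z * z $ j) + ?d * ?I h"
    using int_lin2[OF i_hvz i_h, of 1 ?d] by (simp add: mult.commute)
  have S3': "?I (\<lambda>z. h z * vv j z * vv i z + h z * (- 2 * cv z)) = ?I (\<lambda>z. h z * vv j z * vv i z) - 2 * ?I (\<lambda>z. h z * cv z)"
    using int_lin2[OF i_hvv i_hc, of 1 "-2"] by (simp add: algebra_simps)
  have "?I (\<lambda>z. softmax x (m + z) b * softmax x (m + z) c * (m + z) $ i * (m + z) $ j)
      = ?I (\<lambda>z. (m $ i * m $ j) * h z + m $ i * (h z * z $ j) + m $ j * (h z * z $ i) + 1 * (h z * z $ j * z $ i))"
    by (intro Bochner_Integration.integral_cong refl) (simp add: h_def algebra_simps)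
  also have "\<dots> = (m $ i * m $ j) * ?I h + m $ i * ?I (\<lambda>z. h z * z $ j) + m $ j * ?I (\<lambda>z. h z * z $ i)
      + 1 * ?I (\<lambda>z. h z * z $ j * z $ i)"
    by (rule int_lin4[OF i_h i_hz i_hz i_hzz])
  finally have L: "?I (\<lambda>z. softmax x (m + z) b * softmax x (m + z) c * (m + z) $ i * (m + z) $ j)
      = (m $ i * m $ j) * ?I h + m $ i * ?I (\<lambda>z. h z * z $ j) + m $ j * ?I (\<lambda>z. h z * z $ i)
      + 1 * ?I (\<lambda>z. h z * z $ j * z $ i)" .
  have "?I (\<lambda>z. Fm lam x m b c (m + z) $ i $ j)
      = ?I (\<lambda>z. (m $ i * m $ j) * h z + (m $ i / lam) * (h z * vv j z) + (m $ j / lam) * (h z * vv i z)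
          + (1 / lam\<^sup>2) * (h z * vv j z * vv i z) + (?d / lam) * h z + (- 2 / lam\<^sup>2) * (h z * cv z))"
  proof (intro Bochner_Integration.integral_cong refl)
    fix z
    have dd: "(if i = j then 1 else 0) = ?d" by (simp add: axis_def)
    show "Fm lam x m b c (m + z) $ i $ j = (m $ i * m $ j) * h z + (m $ i / lam) * (h z * vv j z) + (m $ j / lam) * (h z * vv i z)
          + (1 / lam\<^sup>2) * (h z * vv j z * vv i z) + (?d / lam) * h z + (- 2 / lam\<^sup>2) * (h z * cv z)"
      unfolding Fm_nth h_def vv_def cv_def dd using lam by (simp add: field_simps power2_eq_square)
  qed
  also have "\<dots> = (m $ i * m $ j) * ?I h + (m $ i / lam) * ?I (\<lambda>z. h z * vv j z) + (m $ j / lam) * ?I (\<lambda>z. h z * vv i z)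
          + (1 / lam\<^sup>2) * ?I (\<lambda>z. h z * vv j z * vv i z) + (?d / lam) * ?I h + (- 2 / lam\<^sup>2) * ?I (\<lambda>z. h z * cv z)"
    by (rule int_lin6[OF i_h i_hv i_hv i_hvv i_h i_hc])
  finally have R: "?I (\<lambda>z. Fm lam x m b c (m + z) $ i $ j)
      = (m $ i * m $ j) * ?I h + (m $ i / lam) * ?I (\<lambda>z. h z * vv j z) + (m $ j / lam) * ?I (\<lambda>z. h z * vv i z)
          + (1 / lam\<^sup>2) * ?I (\<lambda>z. h z * vv j z * vv i z) + (?d / lam) * ?I h + (- 2 / lam\<^sup>2) * ?I (\<lambda>z. h z * cv z)" .
  show ?thesis
    unfolding L R S1 S2 S2' S3 S3' using lam by (simp add: field_simps power2_eq_square)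
qed

lemma Fm_entry_bound:
  assumes lam: "lam > 0"
  shows "\<bar>Fm lam x m b c Y $ i $ j\<bar> \<le> (norm m + (1 + 4 * Rx x) / lam)\<^sup>2 + 1 / lam + 2 * (1 + 4 * Rx x)\<^sup>2 / lam\<^sup>2"
proof -
  define Q where "Q = 1 + 4 * Rx x"
  define h where "h = softmax x Y b * softmax x Y c"
  define u where "u k = m $ k + (1 / lam) * (x $ b $ k + x $ c $ k - 2 * gibbs_mean x Y $ k)" for k
  have Q0: "Q \<ge> 1" unfolding Q_def using Rx_nonneg[of x] by simp
  have hb: "\<bar>h\<bar> \<le> 1" unfolding h_def abs_mult using softmax_abs_le1 by (metis mult_le_one abs_ge_zero)
  have ub: "\<bar>u k\<bar> \<le> norm m + Q / lam" for k
  proof -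
    have "\<bar>x $ b $ k + x $ c $ k - 2 * gibbs_mean x Y $ k\<bar> \<le> Q"
      unfolding Q_def using comp_le_Rx[of x b k] comp_le_Rx[of x c k] gm_bound[of x Y k] by linarith
    then have "\<bar>(1 / lam) * (x $ b $ k + x $ c $ k - 2 * gibbs_mean x Y $ k)\<bar> \<le> Q / lam"
      using lam by (simp add: abs_mult divide_right_mono)
    then show ?thesis unfolding u_def using component_le_norm_cart[of m k] by linarith
  qed
  have cb: "\<bar>(2 / lam\<^sup>2) * gibbs_cov x Y $ i $ j\<bar> \<le> 2 * Q\<^sup>2 / lam\<^sup>2"
  proof -
    have "2 * (Rx x)\<^sup>2 \<le> Q\<^sup>2" unfolding Q_def using Rx_nonneg[of x]
      by (simp add: power2_eq_square algebra_simps)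
    then have "\<bar>gibbs_cov x Y $ i $ j\<bar> \<le> Q\<^sup>2" using gc_bound[of x Y i j] by linarith
    then show ?thesis using lam by (simp add: abs_mult field_simps)
  qed
  have uu: "\<bar>u i * u j\<bar> \<le> (norm m + Q / lam)\<^sup>2"
  proof -
    have "0 \<le> norm m + Q / lam" using Q0 lam by simp
    then show ?thesis unfolding abs_mult power2_eq_square by (intro mult_mono ub) auto
  qed
  have dl: "\<bar>(1 / lam) * (if i = j then 1 else 0)\<bar> \<le> 1 / lam" using lam by auto
  have "\<bar>u i * u j + (1 / lam) * (if i = j then 1 else 0) - (2 / lam\<^sup>2) * gibbs_cov x Y $ i $ j\<bar>
      \<le> (norm m + Q / lam)\<^sup>2 + 1 / lam + 2 * Q\<^sup>2 / lam\<^sup>2"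
    using uu dl cb by linarith
  then have "\<bar>h * (u i * u j + (1 / lam) * (if i = j then 1 else 0) - (2 / lam\<^sup>2) * gibbs_cov x Y $ i $ j)\<bar>
      \<le> 1 * ((norm m + Q / lam)\<^sup>2 + 1 / lam + 2 * Q\<^sup>2 / lam\<^sup>2)"
    unfolding abs_mult by (intro mult_mono hb) auto
  then show ?thesis unfolding Fm_nth Q_def[symmetric] h_def[symmetric] u_def by simp
qed

lemma norm_mat_le: "norm (A::real^'d^'e) \<le> (\<Sum>i\<in>UNIV. \<Sum>j\<in>UNIV. \<bar>A $ i $ j\<bar>)"
proof -
  have "norm A \<le> (\<Sum>i\<in>UNIV. norm (A $ i))" by (simp add: norm_vec_def L2_set_le_sum)
  also have "\<dots> \<le> (\<Sum>i\<in>UNIV. \<Sum>j\<in>UNIV. \<bar>A $ i $ j\<bar>)" by (intro sum_mono norm_le_l1_cart)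
  finally show ?thesis .
qed

lemma Fm_integrable:
  fixes x :: "real^'d^'k::finite" and m :: "real^'d"
  assumes lam: "lam > 0"
  shows "integrable (gauss_meas lam) (\<lambda>z. Fm lam x m b c (m + z))"
proof -
  define E where "E = (norm m + (1 + 4 * Rx x) / lam)\<^sup>2 + 1 / lam + 2 * (1 + 4 * Rx x)\<^sup>2 / lam\<^sup>2"
  have E: "E \<ge> 0" unfolding E_def using lam by simp
  show ?thesis
  proof (rule gauss_meas_integrable[OF lam, where C="real CARD('d) * real CARD('d) * E"])
    show "(\<lambda>z. Fm lam x m b c (m + z)) \<in> borel_measurable borel" by measurable
    fix z :: "real^'d"
    have "norm (Fm lam x m b c (m + z)) \<le> (\<Sum>i\<in>(UNIV::'d set). \<Sum>j\<in>(UNIV::'d set). E)"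
      using norm_mat_le[of "Fm lam x m b c (m + z)"] Fm_entry_bound[OF lam, of x m b c "m + z"]
      unfolding E_def[symmetric] by (meson order_trans sum_mono)
    also have "\<dots> = real CARD('d) * real CARD('d) * E" by simp
    also have "\<dots> \<le> real CARD('d) * real CARD('d) * E * (1 + norm z)\<^sup>2"
    proof -
      have "1 \<le> (1 + norm z)\<^sup>2" by (rule one_le_power) simp
      from mult_left_mono[OF this, of "real CARD('d) * real CARD('d) * E"] show ?thesis using E by simp
    qed
    finally show "norm (Fm lam x m b c (m + z)) \<le> real CARD('d) * real CARD('d) * E * (1 + norm z)\<^sup>2" .
  qed
qed

theorem lemma3p1:
  fixes p :: "'k::finite \<Rightarrow> real" and mu :: "'k \<Rightarrow> real^'d::finite"
    and lam :: real and x :: "real^'d^'k" and b c :: 'k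
  assumes p_pos: "\<forall>l. 0 < p l \<and> p l < 1"
    and p_sum: "(\<Sum>l\<in>UNIV. p l) = 1"
    and lam_pos: "lam > 0"
    and bc: "b \<noteq> c"
  defines "H \<equiv> - (\<Sum>l\<in>UNIV. p l *\<^sub>R
      (\<integral>z. (let Y = mu l + z in
          (softmax x Y b * softmax x Y c) *\<^sub>R
            (outer (mu l + (1 / lam) *\<^sub>R (x $ b + x $ c - 2 *\<^sub>R gibbs_mean x Y))
                   (mu l + (1 / lam) *\<^sub>R (x $ b + x $ c - 2 *\<^sub>R gibbs_mean x Y))
             + (1 / lam) *\<^sub>R mat 1
             - (2 / lam\<^sup>2) *\<^sub>R gibbs_cov x Y))
        \<partial>gauss_meas lam))"
  shows "(\<forall>i j. \<exists>g. (\<forall>y. ((\<lambda>t. Phi p mu lam (y + t *\<^sub>R coord c j)) has_real_derivative g y) (at 0))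
              \<and> ((\<lambda>t. g (x + t *\<^sub>R coord b i)) has_real_derivative H $ i $ j) (at 0))
         \<and> (\<exists>(\<alpha>::real) (M::real^'d^'d). H = M + \<alpha> *\<^sub>R mat 1 \<and> rank M \<le> CARD('k)\<^sup>2)"
proof -
  let ?gm = "gauss_meas lam"
  let ?F = "\<lambda>l z. Fm lam x (mu l) b c (mu l + z)"
  have Hdef: "H = - (\<Sum>l\<in>UNIV. p l *\<^sub>R (\<integral>z. ?F l z \<partial>?gm))"
    unfolding H_def Fm_def Let_def ..
  have Hij: "H $ i $ j = - (\<Sum>l\<in>UNIV. p l * (\<integral>z. ?F l z $ i $ j \<partial>?gm))" for i j
  proof -
    have bl: "bounded_linear (\<lambda>A::real^'d^'d. A $ i $ j)"
      by (rule bounded_linear_compose[OF bounded_linear_vec_nth bounded_linear_vec_nth])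
    have "(\<integral>z. ?F l z \<partial>?gm) $ i $ j = (\<integral>z. ?F l z $ i $ j \<partial>?gm)" for l
      using integral_bounded_linear[OF bl Fm_integrable[OF lam_pos, of x "mu l" b c]] by simp
    then show ?thesis unfolding Hdef by simp
  qed
  have part1: "\<forall>i j. \<exists>g. (\<forall>y. ((\<lambda>t. Phi p mu lam (y + t *\<^sub>R coord c j)) has_real_derivative g y) (at 0))
              \<and> ((\<lambda>t. g (x + t *\<^sub>R coord b i)) has_real_derivative H $ i $ j) (at 0)"
  proof (intro allI)
    fix i j
    have A: "\<forall>y. ((\<lambda>t. Phi p mu lam (y + t *\<^sub>R coord c j)) has_real_derivative gfun p mu lam c j y) (at 0)"
      using Phi_deriv[OF lam_pos] by blast
    have eq: "(\<integral>z. - (softmax x (mu l + z) b * softmax x (mu l + z) c * (mu l + z) $ i) * (mu l + z) $ j \<partial>?gm)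
        = - (\<integral>z. ?F l z $ i $ j \<partial>?gm)" for l
    proof -
      have "(\<integral>z. - (softmax x (mu l + z) b * softmax x (mu l + z) c * (mu l + z) $ i) * (mu l + z) $ j \<partial>?gm)
          = - (\<integral>z. softmax x (mu l + z) b * softmax x (mu l + z) c * (mu l + z) $ i * (mu l + z) $ j \<partial>?gm)"
        by simp
      also have "\<dots> = - (\<integral>z. ?F l z $ i $ j \<partial>?gm)"
        using stein_block[OF lam_pos, of x "mu l" b c i j] by simp
      finally show ?thesis .
    qed
    have "(\<Sum>l\<in>UNIV. p l * (\<integral>z. - (softmax x (mu l + z) b * softmax x (mu l + z) c * (mu l + z) $ i) * (mu l + z) $ j \<partial>?gm))
        = H $ i $ j"
      unfolding eq Hij by (simp add: sum_negf)
    then have B: "((\<lambda>t. gfun p mu lam c j (x + t *\<^sub>R coord b i)) has_real_derivative H $ i $ j) (at 0)"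
      using g_deriv[OF lam_pos bc, of p mu j x i] by simp
    show "\<exists>g. (\<forall>y. ((\<lambda>t. Phi p mu lam (y + t *\<^sub>R coord c j)) has_real_derivative g y) (at 0))
              \<and> ((\<lambda>t. g (x + t *\<^sub>R coord b i)) has_real_derivative H $ i $ j) (at 0)"
      using A B by blast
  qed
  have part2: "\<exists>(\<alpha>::real) (M::real^'d^'d). H = M + \<alpha> *\<^sub>R mat 1 \<and> rank M \<le> CARD('k)\<^sup>2"
  proof -
    define hh where "hh l z = softmax x (mu l + z) b * softmax x (mu l + z) c" for l z
    define uv where "uv l z = mu l + (1 / lam) *\<^sub>R (x $ b + x $ c - 2 *\<^sub>R gibbs_mean x (mu l + z))" for l z
    define Pe where "Pe l z i j = hh l z * (uv l z $ i * uv l z $ j - (2 / lam\<^sup>2) * gibbs_cov x (mu l + z) $ i $ j)"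
      for l z i j
    have FPe: "?F l z $ i $ j = Pe l z i j + ((1 / lam) * (if i = j then 1 else 0)) * hh l z" for l z i j
      by (simp add: Fm_def outer_def mat_def Pe_def hh_def uv_def algebra_simps)
    have hhm[measurable]: "hh l \<in> borel_measurable borel" for l unfolding hh_def by measurable
    have Pem[measurable]: "(\<lambda>z. Pe l z i j) \<in> borel_measurable borel" for l i j
      unfolding Pe_def uv_def hh_def by measurable
    have hhb: "\<bar>hh l z\<bar> \<le> 1" for l z
      unfolding hh_def abs_mult using softmax_abs_le1 by (metis mult_le_one abs_ge_zero)
    have i_hh: "integrable ?gm (hh l)" for l
      by (rule gm_int[OF lam_pos, where A=1 and B=0 and C=0]) (use hhb in auto)
    have i_Pe: "integrable ?gm (\<lambda>z. Pe l z i j)" for l i j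
    proof -
      define E where "E = (norm (mu l) + (1 + 4 * Rx x) / lam)\<^sup>2 + 1 / lam + 2 * (1 + 4 * Rx x)\<^sup>2 / lam\<^sup>2"
      show ?thesis
      proof (rule gm_int[OF lam_pos, where A="E + 1 / lam" and B=0 and C=0])
        fix z :: "real^'d"
        have "\<bar>?F l z $ i $ j\<bar> \<le> E" unfolding E_def by (rule Fm_entry_bound[OF lam_pos])
        moreover have "\<bar>((1 / lam) * (if i = j then 1 else 0)) * hh l z\<bar> \<le> 1 / lam"
          using hhb[of l z] lam_pos by (auto simp: abs_mult divide_right_mono)
        moreover have "Pe l z i j = ?F l z $ i $ j - ((1 / lam) * (if i = j then 1 else 0)) * hh l z"
          unfolding FPe by simp
        ultimately show "\<bar>Pe l z i j\<bar> \<le> E + 1 / lam + 0 * norm z + 0 * (norm z)\<^sup>2"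
          using abs_triangle_ineq4[of "?F l z $ i $ j" "((1 / lam) * (if i = j then 1 else 0)) * hh l z"]
          by simp
      qed measurable
    qed
    define hI where "hI l = (\<integral>z. hh l z \<partial>?gm)" for l
    define \<alpha> where "\<alpha> = - (1 / lam) * (\<Sum>l\<in>UNIV. p l * hI l)"
    define M where "M = H - \<alpha> *\<^sub>R mat 1"
    have Mij: "M $ i $ j = - (\<Sum>l\<in>UNIV. p l * (\<integral>z. Pe l z i j \<partial>?gm))" for i j
    proof -
      have "(\<integral>z. ?F l z $ i $ j \<partial>?gm) = (\<integral>z. Pe l z i j \<partial>?gm) + ((1 / lam) * (if i = j then 1 else 0)) * hI l" for l
        unfolding FPe hI_def using i_Pe[of l i j] i_hh[of l] by simp
      then have "H $ i $ j = - (\<Sum>l\<in>UNIV. p l * ((\<integral>z. Pe l z i j \<partial>?gm) + ((1 / lam) * (if i = j then 1 else 0)) * hI l))"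
        unfolding Hij by simp
      also have "\<dots> = - (\<Sum>l\<in>UNIV. p l * (\<integral>z. Pe l z i j \<partial>?gm))
          - ((1 / lam) * (if i = j then 1 else 0)) * (\<Sum>l\<in>UNIV. p l * hI l)"
        by (simp add: distrib_left sum.distrib sum_distrib_left mult.left_commute)
      finally have "H $ i $ j = - (\<Sum>l\<in>UNIV. p l * (\<integral>z. Pe l z i j \<partial>?gm))
          - ((1 / lam) * (if i = j then 1 else 0)) * (\<Sum>l\<in>UNIV. p l * hI l)" .
      then show ?thesis unfolding M_def \<alpha>_def by (simp add: mat_def algebra_simps)
    qed
    have inner_sum: "v \<bullet> w = (\<Sum>j\<in>UNIV. v $ j * w $ j)" for v w :: "real^'d"
      by (simp add: inner_vec_def)
    have kernel: "M *v w = 0" if wx: "\<And>a. x $ a \<bullet> w = 0" and wm: "\<And>l. mu l \<bullet> w = 0" for w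
    proof -
      have gw: "gibbs_mean x Y \<bullet> w = 0" for Y
        unfolding gibbs_mean_def by (simp add: inner_sum_left wx)
      have uw: "uv l z \<bullet> w = 0" for l z
        unfolding uv_def by (simp add: inner_add_left inner_diff_left wx wm gw)
      have cw: "(\<Sum>j\<in>UNIV. gibbs_cov x Y $ i $ j * w $ j) = 0" for Y i
      proof -
        have "(\<Sum>j\<in>UNIV. gibbs_cov x Y $ i $ j * w $ j) = (\<chi> j. gibbs_cov x Y $ i $ j) \<bullet> w"
          by (simp add: inner_sum)
        also have "(\<chi> j. gibbs_cov x Y $ i $ j)
            = (\<Sum>a\<in>UNIV. (softmax x Y a * x $ a $ i) *\<^sub>R x $ a) - (gibbs_mean x Y $ i) *\<^sub>R gibbs_mean x Y"
          by (simp add: vec_eq_iff gibbs_cov_nth mult.assoc)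
        also have "\<dots> \<bullet> w = 0"
          by (simp add: inner_sum_left inner_diff_left wx gw)
        finally show ?thesis .
      qed
      have pw: "(\<Sum>j\<in>UNIV. Pe l z i j * w $ j) = 0" for l z i
      proof -
        have "(\<Sum>j\<in>UNIV. Pe l z i j * w $ j)
            = (\<Sum>j\<in>UNIV. (hh l z * uv l z $ i) * (uv l z $ j * w $ j)
                 - (hh l z * (2 / lam\<^sup>2)) * (gibbs_cov x (mu l + z) $ i $ j * w $ j))"
          by (intro sum.cong refl) (simp add: Pe_def right_diff_distrib left_diff_distrib mult.assoc mult.left_commute)
        also have "\<dots> = (hh l z * uv l z $ i) * (\<Sum>j\<in>UNIV. uv l z $ j * w $ j)
                 - (hh l z * (2 / lam\<^sup>2)) * (\<Sum>j\<in>UNIV. gibbs_cov x (mu l + z) $ i $ j * w $ j)"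
          by (simp add: sum_subtractf sum_distrib_left)
        also have "\<dots> = 0" using uw[of l z] cw[of "mu l + z" i] unfolding inner_sum by simp
        finally show ?thesis .
      qed
      have "(M *v w) $ i = 0" for i
      proof -
        have "(M *v w) $ i = (\<Sum>j\<in>UNIV. M $ i $ j * w $ j)" by (simp add: matrix_vector_mult_def)
        also have "\<dots> = - (\<Sum>l\<in>UNIV. p l * (\<Sum>j\<in>UNIV. (\<integral>z. Pe l z i j \<partial>?gm) * w $ j))"
        proof -
          have "(\<Sum>j\<in>UNIV. M $ i $ j * w $ j) = - (\<Sum>j\<in>UNIV. \<Sum>l\<in>UNIV. p l * ((\<integral>z. Pe l z i j \<partial>?gm) * w $ j))"
            unfolding Mij by (simp add: sum_negf sum_distrib_right mult.assoc)
          also have "\<dots> = - (\<Sum>l\<in>UNIV. \<Sum>j\<in>UNIV. p l * ((\<integral>z. Pe l z i j \<partial>?gm) * w $ j))"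
            by (subst sum.swap) (rule refl)
          also have "\<dots> = - (\<Sum>l\<in>UNIV. p l * (\<Sum>j\<in>UNIV. (\<integral>z. Pe l z i j \<partial>?gm) * w $ j))"
            by (simp add: sum_distrib_left)
          finally show ?thesis .
        qed
        also have "\<dots> = - (\<Sum>l\<in>UNIV. p l * (\<integral>z. (\<Sum>j\<in>UNIV. Pe l z i j * w $ j) \<partial>?gm))"
        proof -
          have "(\<Sum>j\<in>UNIV. (\<integral>z. Pe l z i j \<partial>?gm) * w $ j) = (\<integral>z. (\<Sum>j\<in>UNIV. Pe l z i j * w $ j) \<partial>?gm)" for l
            using Bochner_Integration.integral_sum[where I=UNIV and M="?gm" and f="\<lambda>j z. Pe l z i j * w $ j"] i_Pe by simp
          then show ?thesis by simp
        qed
        also have "\<dots> = 0" by (simp add: pw)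
        finally show ?thesis .
      qed
      then show ?thesis by (simp add: vec_eq_iff)
    qed
    define S where "S = range mu \<union> range (\<lambda>a. x $ a)"
    have finS: "finite S" unfolding S_def by simp
    have rng: "range (\<lambda>v. M *v v) \<subseteq> (\<lambda>v. M *v v) ` span S"
    proof clarify
      fix v
      obtain y z where y: "y \<in> span S" and z: "\<And>w. w \<in> span S \<Longrightarrow> orthogonal z w" and v: "v = y + z"
        using orthogonal_subspace_decomp_exists[of S v] by blast
      have "M *v z = 0"
      proof (rule kernel)
        show "x $ a \<bullet> z = 0" for a
          using z[of "x $ a"] by (simp add: S_def span_base orthogonal_def inner_commute)
        show "mu l \<bullet> z = 0" for l
          using z[of "mu l"] by (simp add: S_def span_base orthogonal_def inner_commute)
      qed
      then have "M *v v = M *v y" unfolding v by (simp add: matrix_vector_right_distrib)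
      then show "M *v v \<in> (\<lambda>v. M *v v) ` span S" using y by blast
    qed
    have "rank M = dim (range (\<lambda>v. M *v v))" by (rule rank_dim_range)
    also have "\<dots> \<le> dim ((\<lambda>v. M *v v) ` span S)" by (rule dim_subset[OF rng])
    also have "\<dots> \<le> dim (span S)" by (rule dim_image_le) simp
    also have "\<dots> = dim S" by simp
    also have "\<dots> \<le> card S" using finS by (intro dim_le_card) (auto intro: span_base)
    also have "\<dots> \<le> card (range mu) + card (range (\<lambda>a. x $ a))" unfolding S_def by (rule card_Un_le)
    also have "\<dots> \<le> CARD('k) + CARD('k)" by (intro add_mono card_image_le) auto
    also have "\<dots> \<le> CARD('k)\<^sup>2"
    proof -
      have "card {b, c} \<le> CARD('k)" by (rule card_mono) auto
      then have "2 \<le> CARD('k)" using bc by simp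
      then have "2 * CARD('k) \<le> CARD('k) * CARD('k)" by (rule mult_right_mono) simp
      then show ?thesis by (simp add: power2_eq_square mult_2)
    qed
    finally have "rank M \<le> CARD('k)\<^sup>2" .
    moreover have "H = M + \<alpha> *\<^sub>R mat 1" unfolding M_def by simp
    ultimately show ?thesis by blast
  qed
  show ?thesis using part1 part2 by blast
qed


end
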